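(* Let $\mathbb{k}$ be a field of characteristic $0$ containing a primitive $n$-th root of unity $\omega$, let $H=T_{n^2}(\omega)$ be the Taft Hopf algebra, and let $A=\mathbb{k}[z]/(z^n-\omega)$ with $u$ the image of $z$. Let $a_i=(\omega-1)^i\omega^{i(i+1)/2}$ and let $\rho:A\to H\otimes A$ be the algebra homomorphism determined by $\rho(u)=\sum_{i=0}^{n-1}a_i\,x^ig^{-(i+1)}\otimes u^{i+1}$. Then $A$ is an $H$-comodule algebra via $\rho$, i.e. $(\mathrm{id}\otimes\rho)\rho=(\Delta\otimes\mathrm{id})\rho$.
   Context: The Taft Hopf algebra is $H=T_{n^2}(\omega)=\mathbb{k}\langle x,g\mid x^n=0,\ g^n=1,\ xg=\omega gx\rangle$ with $\Delta(g)=g\otimes g$, $\Delta(x)=x\otimes 1+g\otimes x$, $\epsilon(g)=1$, $\epsilon(x)=0$, $S(g)=g^{-1}$, $S(x)=-g^{-1}x$. The assignment $u\mapsto\rho(u)$ extends to an algebra homomorphism since $\rho(u)^n=\omega(1\otimes1)$. *)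

theory Defs
  imports Main
begin

text \<open>Vectors over a field with respect to a fixed finite basis indexed by 'b are
  represented by coefficient functions 'b \<Rightarrow> 'k (only values on the basis matter).
  A finite-dimensional algebra is given by its basis set and the product of basis
  elements, m p q = (c, r) meaning  e_p * e_q = c * e_r.\<close>

definition vmul :: "'b set \<Rightarrow> ('b \<Rightarrow> 'b \<Rightarrow> 'k \<times> 'b) \<Rightarrow> ('b \<Rightarrow> 'k::field) \<Rightarrow> ('b \<Rightarrow> 'k) \<Rightarrow> ('b \<Rightarrow> 'k)" where
  "vmul B m v w = (\<lambda>b. \<Sum>p\<in>B. \<Sum>q\<in>B. if snd (m p q) = b then v p * w q * fst (m p q) else 0)"

definition vunit :: "'b \<Rightarrow> ('b \<Rightarrow> 'k::field)" where
  "vunit e = (\<lambda>b. if b = e then 1 else 0)"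

definition vpow :: "'b set \<Rightarrow> ('b \<Rightarrow> 'b \<Rightarrow> 'k \<times> 'b) \<Rightarrow> 'b \<Rightarrow> ('b \<Rightarrow> 'k::field) \<Rightarrow> nat \<Rightarrow> ('b \<Rightarrow> 'k)" where
  "vpow B m e v k = (vmul B m v ^^ k) (vunit e)"

definition lin :: "'b set \<Rightarrow> ('b \<Rightarrow> ('c \<Rightarrow> 'k::field)) \<Rightarrow> ('b \<Rightarrow> 'k) \<Rightarrow> ('c \<Rightarrow> 'k)" where
  "lin B f v = (\<lambda>c. \<Sum>p\<in>B. v p * f p c)"

definition vtensor :: "('b \<Rightarrow> 'k::field) \<Rightarrow> ('c \<Rightarrow> 'k) \<Rightarrow> ('b \<times> 'c \<Rightarrow> 'k)" where
  "vtensor v w = (\<lambda>(p, q). v p * w q)"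

definition tensor_bm :: "('b \<Rightarrow> 'b \<Rightarrow> 'k \<times> 'b) \<Rightarrow> ('c \<Rightarrow> 'c \<Rightarrow> 'k \<times> 'c)
    \<Rightarrow> ('b \<times> 'c) \<Rightarrow> ('b \<times> 'c) \<Rightarrow> ('k::field) \<times> ('b \<times> 'c)" where
  "tensor_bm m1 m2 = (\<lambda>(p1, p2) (q1, q2).
      (fst (m1 p1 q1) * fst (m2 p2 q2), (snd (m1 p1 q1), snd (m2 p2 q2))))"

text \<open>PBW basis x^i g^j, 0 \<le> i, j < n, indexed by (i, j). From x g = \<omega> g x one gets
  g^j x^k = \<omega>^(-jk) x^k g^j, hence
  (x^i g^j)(x^k g^l) = \<omega>^(-jk) x^(i+k) g^((j+l) mod n), which is 0 if i+k \<ge> n.\<close>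
definition taft_basis :: "nat \<Rightarrow> (nat \<times> nat) set" where
  "taft_basis n = {0..<n} \<times> {0..<n}"

definition taft_bm :: "nat \<Rightarrow> 'k::field \<Rightarrow> nat \<times> nat \<Rightarrow> nat \<times> nat \<Rightarrow> 'k \<times> (nat \<times> nat)" where
  "taft_bm n \<omega> = (\<lambda>(i, j) (k, l).
      if i + k < n then ((inverse \<omega>) ^ (j * k), (i + k, (j + l) mod n)) else (0, (0, 0)))"

definition taft_x :: "nat \<times> nat \<Rightarrow> 'k::field" where "taft_x = vunit (1, 0)"
definition taft_g :: "nat \<times> nat \<Rightarrow> 'k::field" where "taft_g = vunit (0, 1)"

text \<open>g^{-1} = g^{n-1} since g^n = 1.\<close>
definition taft_ginv :: "nat \<Rightarrow> 'k::field \<Rightarrow> nat \<times> nat \<Rightarrow> 'k" where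
  "taft_ginv n \<omega> = vpow (taft_basis n) (taft_bm n \<omega>) (0, 0) taft_g (n - 1)"

definition HH_basis :: "nat \<Rightarrow> ((nat \<times> nat) \<times> (nat \<times> nat)) set" where
  "HH_basis n = taft_basis n \<times> taft_basis n"
definition HH_bm :: "nat \<Rightarrow> 'k::field \<Rightarrow> _" where
  "HH_bm n \<omega> = tensor_bm (taft_bm n \<omega>) (taft_bm n \<omega>)"

text \<open>Comultiplication: the algebra map with \<Delta>(g) = g \<otimes> g, \<Delta>(x) = x \<otimes> 1 + g \<otimes> x;
  on basis elements \<Delta>(x^i g^j) = \<Delta>(x)^i \<Delta>(g)^j.\<close>
definition taft_Delta_x :: "(nat \<times> nat) \<times> (nat \<times> nat) \<Rightarrow> 'k::field" where
  "taft_Delta_x = (\<lambda>b. vtensor taft_x (vunit (0, 0)) b + vtensor taft_g taft_x b)"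
definition taft_Delta_g :: "(nat \<times> nat) \<times> (nat \<times> nat) \<Rightarrow> 'k::field" where
  "taft_Delta_g = vtensor taft_g taft_g"

definition taft_Delta_basis :: "nat \<Rightarrow> 'k::field \<Rightarrow> nat \<times> nat \<Rightarrow> (nat \<times> nat) \<times> (nat \<times> nat) \<Rightarrow> 'k" where
  "taft_Delta_basis n \<omega> = (\<lambda>(i, j). vmul (HH_basis n) (HH_bm n \<omega>)
      (vpow (HH_basis n) (HH_bm n \<omega>) ((0, 0), (0, 0)) taft_Delta_x i)
      (vpow (HH_basis n) (HH_bm n \<omega>) ((0, 0), (0, 0)) taft_Delta_g j))"

section \<open>A = k[z]/(z^n - \<omega>), basis u^k, 0 \<le> k < n\<close>

definition A_basis :: "nat \<Rightarrow> nat set" where "A_basis n = {0..<n}"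
definition A_bm :: "nat \<Rightarrow> 'k::field \<Rightarrow> nat \<Rightarrow> nat \<Rightarrow> 'k \<times> nat" where
  "A_bm n \<omega> = (\<lambda>k l. (if k + l < n then 1 else \<omega>, (k + l) mod n))"
definition A_u :: "nat \<Rightarrow> 'k::field" where "A_u = vunit 1"

definition HA_basis :: "nat \<Rightarrow> ((nat \<times> nat) \<times> nat) set" where
  "HA_basis n = taft_basis n \<times> A_basis n"
definition HA_bm :: "nat \<Rightarrow> 'k::field \<Rightarrow> _" where
  "HA_bm n \<omega> = tensor_bm (taft_bm n \<omega>) (A_bm n \<omega>)"

definition coef_a :: "'k::field \<Rightarrow> nat \<Rightarrow> 'k" where
  "coef_a \<omega> i = (\<omega> - 1) ^ i * \<omega> ^ (i * (i + 1) div 2)"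

definition rho_u :: "nat \<Rightarrow> 'k::field \<Rightarrow> (nat \<times> nat) \<times> nat \<Rightarrow> 'k" where
  "rho_u n \<omega> = (\<lambda>b. \<Sum>i<n. coef_a \<omega> i *
      vtensor (vmul (taft_basis n) (taft_bm n \<omega>)
                 (vpow (taft_basis n) (taft_bm n \<omega>) (0, 0) taft_x i)
                 (vpow (taft_basis n) (taft_bm n \<omega>) (0, 0) (taft_ginv n \<omega>) (i + 1)))
              (vpow (A_basis n) (A_bm n \<omega>) 0 A_u (i + 1)) b)"

definition rho :: "nat \<Rightarrow> 'k::field \<Rightarrow> (nat \<Rightarrow> 'k) \<Rightarrow> ((nat \<times> nat) \<times> nat \<Rightarrow> 'k)" where
  "rho n \<omega> = lin (A_basis n) (\<lambda>k. vpow (HA_basis n) (HA_bm n \<omega>) ((0, 0), 0) (rho_u n \<omega>) k)"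

text \<open>H \<otimes> H \<otimes> A is indexed by (p, (q, k)).
  (id \<otimes> \<rho>)(e_p \<otimes> u^k) = e_p \<otimes> \<rho>(u^k);  (\<Delta> \<otimes> id)(e_p \<otimes> u^k) = \<Delta>(e_p) \<otimes> u^k.\<close>
definition id_tensor_rho :: "nat \<Rightarrow> 'k::field \<Rightarrow> ((nat \<times> nat) \<times> nat \<Rightarrow> 'k)
    \<Rightarrow> ((nat \<times> nat) \<times> ((nat \<times> nat) \<times> nat) \<Rightarrow> 'k)" where
  "id_tensor_rho n \<omega> = lin (HA_basis n)
      (\<lambda>(p, k). vtensor (vunit p) (rho n \<omega> (vunit k)))"

definition Delta_tensor_id :: "nat \<Rightarrow> 'k::field \<Rightarrow> ((nat \<times> nat) \<times> nat \<Rightarrow> 'k)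
    \<Rightarrow> ((nat \<times> nat) \<times> ((nat \<times> nat) \<times> nat) \<Rightarrow> 'k)" where
  "Delta_tensor_id n \<omega> = lin (HA_basis n)
      (\<lambda>(p, k). (\<lambda>(p1, (p2, l)). vtensor (taft_Delta_basis n \<omega> p) (vunit k) ((p1, p2), l)))"

definition primitive_root :: "nat \<Rightarrow> 'k::field \<Rightarrow> bool" where
  "primitive_root n \<omega> \<longleftrightarrow> 0 < n \<and> \<omega> ^ n = 1 \<and> (\<forall>k. 0 < k \<and> k < n \<longrightarrow> \<omega> ^ k \<noteq> 1)"

end

theory Submission
  imports Defs "HOL-Library.Function_Algebras" "HOL-Computational_Algebra.Polynomial"
begin


declare plus_fun_apply[simp del] zero_fun_apply[simp del] minus_apply[simp del] times_fun_apply[simp del] one_fun_apply[simp del]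
lemmas fun_app = plus_fun_apply zero_fun_apply minus_apply

definition sc :: "'k::field \<Rightarrow> ('b \<Rightarrow> 'k) \<Rightarrow> ('b \<Rightarrow> 'k)" where
  "sc c v = (\<lambda>b. c * v b)"

lemma sc_apply: "sc c v b = c * v b" by (simp add: sc_def)

lemma vunit_apply: "vunit e b = (if b = e then 1 else 0)" by (simp add: vunit_def)

lemma sum_fun_apply: "(\<Sum>i\<in>I. f i) x = (\<Sum>i\<in>I. f i x)"
  by (induction I rule: infinite_finite_induct) (auto simp: fun_app)



definition supp_in :: "'b set \<Rightarrow> ('b \<Rightarrow> 'k::zero) \<Rightarrow> bool" where
  "supp_in B v \<longleftrightarrow> (\<forall>b. b \<notin> B \<longrightarrow> v b = 0)"

lemma vmul_expand:
  "vmul B m v w b = (\<Sum>p\<in>B. \<Sum>q\<in>B. v p * w q * (if snd (m p q) = b then fst (m p q) else 0))"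
  unfolding vmul_def by (intro sum.cong refl) simp

lemma vmul_add_l: "vmul B m (v + w) z = vmul B m v z + vmul B m w z"
  by (rule ext) (simp add: fun_app vmul_expand sum.distrib[symmetric] algebra_simps)
lemma vmul_add_r: "vmul B m z (v + w) = vmul B m z v + vmul B m z w"
  by (rule ext) (simp add: fun_app vmul_expand sum.distrib[symmetric] algebra_simps)
lemma vmul_diff_l: "vmul B m (v - w) z = vmul B m v z - vmul B m w z"
  by (rule ext) (simp add: fun_app vmul_expand sum_subtractf[symmetric] algebra_simps)
lemma vmul_diff_r: "vmul B m z (v - w) = vmul B m z v - vmul B m z w"
  by (rule ext) (simp add: fun_app vmul_expand sum_subtractf[symmetric] algebra_simps)
lemma vmul_sc_l: "vmul B m (sc c v) z = sc c (vmul B m v z)"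
  by (rule ext) (simp add: fun_app sc_apply vmul_expand sum_distrib_left algebra_simps)
lemma vmul_sc_r: "vmul B m z (sc c v) = sc c (vmul B m z v)"
  by (rule ext) (simp add: fun_app sc_apply vmul_expand sum_distrib_left algebra_simps)
lemma vmul_zero_l: "vmul B m 0 z = 0"
  by (rule ext) (simp add: fun_app vmul_expand zero_fun_def)
lemma vmul_zero_r: "vmul B m z 0 = 0"
  by (rule ext) (simp add: fun_app vmul_expand zero_fun_def)
lemma vmul_sum_l: "vmul B m (\<Sum>i\<in>I. f i) z = (\<Sum>i\<in>I. vmul B m (f i) z)"
proof (induction I rule: infinite_finite_induct)
  case (infinite A) then show ?case by (metis sum.infinite vmul_zero_l)
next
  case empty show ?case by (metis sum.empty vmul_zero_l)
next
  case (insert x F) then show ?case by (metis sum.insert vmul_add_l)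
qed
lemma vmul_sum_r: "vmul B m z (\<Sum>i\<in>I. f i) = (\<Sum>i\<in>I. vmul B m z (f i))"
proof (induction I rule: infinite_finite_induct)
  case (infinite A) then show ?case by (metis sum.infinite vmul_zero_r)
next
  case empty show ?case by (metis sum.empty vmul_zero_r)
next
  case (insert x F) then show ?case by (metis sum.insert vmul_add_r)
qed

lemma sc_sc[simp]: "sc a (sc b v) = sc (a * b) v" by (rule ext) (simp add: fun_app sc_apply)
lemma sc_1[simp]: "sc 1 v = v" by (rule ext) (simp add: fun_app sc_apply)
lemma sc_0[simp]: "sc 0 v = 0" by (rule ext) (simp add: fun_app sc_apply)
lemma sc_zero[simp]: "sc a 0 = 0" by (rule ext) (simp add: fun_app sc_apply)
lemma sc_add: "sc a (v + w) = sc a v + sc a w" by (rule ext) (simp add: fun_app sc_apply algebra_simps)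
lemma sc_diff: "sc a (v - w) = sc a v - sc a w" by (rule ext) (simp add: fun_app sc_apply algebra_simps)
lemma sc_sum: "sc a (\<Sum>i\<in>I. f i) = (\<Sum>i\<in>I. sc a (f i))"
  by (rule ext) (simp add: fun_app sc_apply sum_fun_apply sum_distrib_left)
lemma sc_add_l: "sc (a + b) v = sc a v + sc b v" by (rule ext) (simp add: fun_app sc_apply algebra_simps)

lemma sum_vunit:
  assumes "q0 \<in> B" "finite B"
  shows "(\<Sum>q\<in>B. vunit q0 q * G q) = G q0"
proof -
  have "(\<Sum>q\<in>B. vunit q0 q * G q) = (\<Sum>q\<in>B. if q0 = q then G q else 0)"
    by (rule sum.cong) (auto simp: vunit_def)
  then show ?thesis using assms by (simp add: sum.delta)
qed

lemma sum_vunit':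
  assumes "q0 \<in> B" "finite B"
  shows "(\<Sum>q\<in>B. G q * vunit q0 q) = G q0"
  using sum_vunit[OF assms, of G] by (simp add: mult.commute)

lemma sum_collapse2:
  assumes "p0 \<in> B" "q0 \<in> B" "finite B"
  shows "(\<Sum>p\<in>B. \<Sum>q\<in>B. vunit p0 p * vunit q0 q * F p q) = F p0 q0"
proof -
  have "(\<Sum>p\<in>B. \<Sum>q\<in>B. vunit p0 p * vunit q0 q * F p q) = (\<Sum>p\<in>B. vunit p0 p * (\<Sum>q\<in>B. vunit q0 q * F p q))"
    by (simp add: sum_distrib_left mult.assoc)
  also have "\<dots> = F p0 q0" using assms by (simp add: sum_vunit)
  finally show ?thesis .
qed

lemma vmul_unit:
  assumes "p \<in> B" "q \<in> B" "finite B"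
  shows "vmul B m (vunit p) (vunit q) = sc (fst (m p q)) (vunit (snd (m p q)))"
  using assms by (intro ext) (simp only: vmul_expand sum_collapse2[OF assms(1,2,3)], simp add: vunit_def sc_def)


lemma vmul_cong:
  assumes "\<And>p. p \<in> B \<Longrightarrow> u p = u' p" "\<And>q. q \<in> B \<Longrightarrow> v q = v' q"
  shows "vmul B m u v = vmul B m u' v'"
  using assms by (intro ext) (simp add: fun_app vmul_expand)

definition rs :: "'b set \<Rightarrow> ('b \<Rightarrow> 'k::field) \<Rightarrow> ('b \<Rightarrow> 'k)" where
  "rs B u = (\<Sum>p\<in>B. sc (u p) (vunit p))"

lemma vunit_sym: "vunit p i = vunit i p" by (simp add: vunit_def)

lemma rs_apply: "finite B \<Longrightarrow> p \<in> B \<Longrightarrow> rs B u p = u p"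
  unfolding rs_def sum_fun_apply sc_apply
  by (subst vunit_sym) (rule sum_vunit')

lemma vmul_rs: "finite B \<Longrightarrow> vmul B m u v = vmul B m (rs B u) (rs B v)"
  by (rule vmul_cong) (simp_all add: rs_apply)

lemma supp_inI: "(\<And>b. b \<notin> B \<Longrightarrow> v b = 0) \<Longrightarrow> supp_in B v"
  by (simp add: supp_in_def)

lemma supp_rs: "finite B \<Longrightarrow> supp_in B v \<Longrightarrow> rs B v = v"
proof (rule ext)
  fix b assume f: "finite B" and v: "supp_in B v"
  show "rs B v b = v b"
  proof (cases "b \<in> B")
    case True then show ?thesis using f by (simp add: rs_apply)
  next
    case False
    then have "rs B v b = 0" unfolding rs_def sum_fun_apply sc_apply
      by (intro sum.neutral) (auto simp: vunit_def)
    then show ?thesis using False v by (simp add: supp_in_def)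
  qed
qed

lemma supp_add: "supp_in B (v::_\<Rightarrow>'k::field) \<Longrightarrow> supp_in B w \<Longrightarrow> supp_in B (v + w)"
  by (auto simp add: supp_in_def fun_app)
lemma supp_diff: "supp_in B (v::_\<Rightarrow>'k::field) \<Longrightarrow> supp_in B w \<Longrightarrow> supp_in B (v - w)"
  by (auto simp add: supp_in_def fun_app)
lemma supp_sc: "supp_in B v \<Longrightarrow> supp_in B (sc c v)"
  by (simp add: supp_in_def sc_apply)
lemma supp_zero: "supp_in B (0::_\<Rightarrow>'k::field)"
  by (simp add: supp_in_def fun_app)
lemma supp_sum: "(\<And>i. i \<in> I \<Longrightarrow> supp_in B (f i :: _ \<Rightarrow> 'k::field)) \<Longrightarrow> supp_in B (\<Sum>i\<in>I. f i)"
  by (simp add: supp_in_def sum_fun_apply)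
lemma supp_vunit: "p \<in> B \<Longrightarrow> supp_in B (vunit p :: _ \<Rightarrow> 'k::field)"
  by (simp add: supp_in_def vunit_def)

locale balg =
  fixes B :: "'b set" and m :: "'b \<Rightarrow> 'b \<Rightarrow> 'k::field \<times> 'b" and e :: 'b
  assumes fin: "finite B" and e_in: "e \<in> B"
    and closed: "p \<in> B \<Longrightarrow> q \<in> B \<Longrightarrow> snd (m p q) \<in> B"
    and unit_l: "p \<in> B \<Longrightarrow> m e p = (1, p)"
    and unit_r: "p \<in> B \<Longrightarrow> m p e = (1, p)"
    and assoc: "p \<in> B \<Longrightarrow> q \<in> B \<Longrightarrow> s \<in> B \<Longrightarrow>
       fst (m p q) * fst (m (snd (m p q)) s) = fst (m q s) * fst (m p (snd (m q s))) \<and>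
       (fst (m p q) * fst (m (snd (m p q)) s) \<noteq> 0 \<longrightarrow>
          snd (m (snd (m p q)) s) = snd (m p (snd (m q s))))"
begin

lemma supp_mul: "supp_in B (vmul B m u v)"
  by (auto simp: supp_in_def vmul_expand intro!: sum.neutral dest: closed)

lemma unit_basis_assoc:
  assumes "p \<in> B" "q \<in> B" "s \<in> B"
  shows "vmul B m (vmul B m (vunit p) (vunit q)) (vunit s) = vmul B m (vunit p) (vmul B m (vunit q) (vunit s))"
proof -
  have L: "vmul B m (vmul B m (vunit p) (vunit q)) (vunit s) = sc (fst (m p q) * fst (m (snd (m p q)) s)) (vunit (snd (m (snd (m p q)) s)))"
    using assms fin closed by (simp add: vmul_unit vmul_sc_l)
  have R: "vmul B m (vunit p) (vmul B m (vunit q) (vunit s)) = sc (fst (m q s) * fst (m p (snd (m q s)))) (vunit (snd (m p (snd (m q s)))))"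
    using assms fin closed by (simp add: vmul_unit vmul_sc_r)
  show ?thesis unfolding L R using assoc[OF assms] by (cases "fst (m p q) * fst (m (snd (m p q)) s) = 0") auto
qed

lemma mul_assoc: "vmul B m (vmul B m u v) w = vmul B m u (vmul B m v w)"
proof -
  have "vmul B m (vmul B m u v) w = vmul B m (vmul B m (rs B u) (rs B v)) (rs B w)"
    by (subst vmul_rs[OF fin, of m u v]) (rule vmul_cong, simp_all add: rs_apply fin)
  also have "\<dots> = vmul B m (rs B u) (vmul B m (rs B v) (rs B w))"
    unfolding rs_def vmul_sum_l vmul_sum_r vmul_sc_l vmul_sc_r sc_sum
    by (intro sum.cong refl) (simp only: unit_basis_assoc)
  also have "\<dots> = vmul B m u (vmul B m v w)"
    by (rule sym, subst vmul_rs[OF fin, of m v w]) (rule vmul_cong, simp_all add: rs_apply fin)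
  finally show ?thesis .
qed

lemma one_l: "supp_in B v \<Longrightarrow> vmul B m (vunit e) v = v"
proof -
  assume v: "supp_in B v"
  have "vmul B m (vunit e) v = vmul B m (vunit e) (rs B v)" using fin by (intro vmul_cong) (simp_all add: rs_apply)
  also have "\<dots> = rs B v"
    unfolding rs_def vmul_sum_r vmul_sc_r using fin e_in
    by (intro sum.cong refl) (simp add: vmul_unit unit_l)
  finally show ?thesis using supp_rs[OF fin v] by simp
qed

lemma one_r: "supp_in B v \<Longrightarrow> vmul B m v (vunit e) = v"
proof -
  assume v: "supp_in B v"
  have "vmul B m v (vunit e) = vmul B m (rs B v) (vunit e)" using fin by (intro vmul_cong) (simp_all add: rs_apply)
  also have "\<dots> = rs B v"
    unfolding rs_def vmul_sum_l vmul_sc_l using fin e_in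
    by (intro sum.cong refl) (simp add: vmul_unit unit_r)
  finally show ?thesis using supp_rs[OF fin v] by simp
qed

end


context balg begin

lemma pow_0: "vpow B m e v 0 = vunit e" by (simp add: vpow_def)
lemma pow_Suc: "vpow B m e v (Suc k) = vmul B m v (vpow B m e v k)" by (simp add: vpow_def)

lemma supp_one: "supp_in B (vunit e)" by (rule supp_vunit[OF e_in])

lemma supp_pow: "supp_in B (vpow B m e v k)"
  by (cases k) (simp_all add: pow_0 pow_Suc supp_one supp_mul)

lemma pow_add: "vpow B m e v (a + b) = vmul B m (vpow B m e v a) (vpow B m e v b)"
  by (induction a) (simp_all add: pow_0 pow_Suc one_l supp_pow mul_assoc)

lemma pow_1: "supp_in B v \<Longrightarrow> vpow B m e v 1 = v"
  by (simp add: pow_Suc pow_0 one_r)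

lemma pow_Suc': "supp_in B v \<Longrightarrow> vpow B m e v (Suc k) = vmul B m (vpow B m e v k) v"
  using pow_add[of v k 1] pow_1[of v] by simp

lemma pow_sc: "vpow B m e (sc c v) k = sc (c ^ k) (vpow B m e v k)"
  by (induction k) (simp_all add: pow_0 pow_Suc vmul_sc_l vmul_sc_r mult.commute)

lemma pow_zero: "vpow B m e 0 (Suc k) = 0"
  by (simp add: pow_Suc vmul_zero_l)

lemma telescope:
  assumes "supp_in B Z"
  shows "vmul B m (vunit e - Y) (\<Sum>i<k. vmul B m (vpow B m e Y i) Z) = Z - vmul B m (vpow B m e Y k) Z"
proof (induction k)
  case 0 then show ?case by (simp add: vmul_zero_r pow_0 one_l assms)
next
  case (Suc k)
  have "vmul B m (vunit e - Y) (vmul B m (vpow B m e Y k) Z) = vmul B m (vpow B m e Y k) Z - vmul B m (vpow B m e Y (Suc k)) Z"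
    by (simp add: vmul_diff_l one_l supp_mul pow_Suc mul_assoc)
  then show ?case using Suc by (simp add: vmul_add_r)
qed

lemma nil_cancel:
  assumes "supp_in B Z" "vmul B m (vunit e - N) Z = 0" "vpow B m e N k = 0"
  shows "Z = 0"
proof -
  have Z: "Z = vmul B m N Z" using assms(2) by (simp add: vmul_diff_l one_l assms(1))
  have "Z = vmul B m (vpow B m e N j) Z" for j
  proof (induction j)
    case 0 then show ?case by (simp add: pow_0 one_l assms(1))
  next
    case (Suc j)
    have "Z = vmul B m N Z" by (rule Z)
    also have "\<dots> = vmul B m N (vmul B m (vpow B m e N j) Z)" using Suc by simp
    finally show ?case by (simp add: pow_Suc mul_assoc)
  qed
  from this[of k] show ?thesis by (simp add: assms(3) vmul_zero_l)
qed

end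

lemma lin_as_sum: "lin B f v = (\<Sum>p\<in>B. sc (v p) (f p))"
  by (rule ext) (simp add: fun_app lin_def sum_fun_apply sc_apply)
lemma lin_add: "lin B f (v + w) = lin B f v + lin B f w"
  by (rule ext) (simp add: fun_app lin_def algebra_simps sum.distrib)
lemma lin_diff: "lin B f (v - w) = lin B f v - lin B f w"
  by (rule ext) (simp add: fun_app lin_def algebra_simps sum_subtractf)
lemma lin_sc: "lin B f (sc c v) = sc c (lin B f v)"
  by (rule ext) (simp add: fun_app lin_def algebra_simps sum_distrib_left sc_apply)
lemma lin_zero: "lin B f 0 = 0"
  by (rule ext) (simp add: fun_app lin_def)
lemma lin_sum: "lin B f (\<Sum>i\<in>I. g i) = (\<Sum>i\<in>I. lin B f (g i))"
proof (induction I rule: infinite_finite_induct)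
  case (infinite A) then show ?case by (metis sum.infinite lin_zero)
next
  case empty show ?case by (metis sum.empty lin_zero)
next
  case (insert x F) then show ?case by (metis sum.insert lin_add)
qed
lemma lin_vunit: "finite B \<Longrightarrow> p \<in> B \<Longrightarrow> lin B f (vunit p) = f p"
  by (rule ext) (simp add: fun_app lin_def sum_vunit vunit_sym[of _ p])

lemma lin_cong: "(\<And>p. p \<in> B \<Longrightarrow> v p = w p) \<Longrightarrow> lin B f v = lin B f w"
  by (rule ext) (simp add: fun_app lin_def)

lemma lin_lin: "lin B f (lin C g a) = lin C (\<lambda>k. lin B f (g k)) a"
  by (simp add: lin_as_sum[of C] lin_sum lin_sc)

lemma swap_sc: "(\<Sum>q\<in>B. sc (w q) (\<Sum>p\<in>A. sc (v p) (X p q))) = (\<Sum>p\<in>A. sc (v p) (\<Sum>q\<in>B. sc (w q) (X p q)))"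
  by (simp add: sc_sum sum.swap[of _ B A] mult.commute)

lemma lin_hom:
  assumes fin: "finite B" and cl: "\<And>p q. p \<in> B \<Longrightarrow> q \<in> B \<Longrightarrow> snd (m p q) \<in> B"
    and h: "\<And>p q. p \<in> B \<Longrightarrow> q \<in> B \<Longrightarrow> sc (fst (m p q)) (f (snd (m p q))) = vmul B' m' (f p) (f q)"
  shows "lin B f (vmul B m v w) = vmul B' m' (lin B f v) (lin B f w)"
proof -
  have "lin B f (vmul B m v w) = lin B f (vmul B m (rs B v) (rs B w))" using vmul_rs[OF fin] by metis
  also have "\<dots> = (\<Sum>q\<in>B. sc (w q) (\<Sum>p\<in>B. sc (v p) (vmul B' m' (f p) (f q))))"
    unfolding rs_def vmul_sum_l vmul_sum_r vmul_sc_l vmul_sc_r lin_sum lin_sc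
    by (intro sum.cong refl) (simp add: vmul_unit fin lin_sc lin_vunit cl h)
  also have "\<dots> = vmul B' m' (lin B f v) (lin B f w)"
    unfolding lin_as_sum[of B] vmul_sum_l vmul_sum_r vmul_sc_l vmul_sc_r ..
  finally show ?thesis .
qed


section \<open>Tensors\<close>

lemma sum_prod2: "(\<Sum>P\<in>A \<times> B. G P) = (\<Sum>a\<in>A. \<Sum>b\<in>B. G (a, b))"
  by (simp add: sum.cartesian_product)

lemma tensor_bm_simp[simp]: "tensor_bm m1 m2 (p1, p2) (q1, q2) = (fst (m1 p1 q1) * fst (m2 p2 q2), (snd (m1 p1 q1), snd (m2 p2 q2)))"
  by (simp add: tensor_bm_def)

lemma vtensor_apply: "vtensor v w (p, q) = v p * w q" by (simp add: vtensor_def)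

lemma vtensor_mul:
  fixes v1 w1 :: "'b \<Rightarrow> 'k::field" and v2 w2 :: "'c \<Rightarrow> 'k"
  shows "vmul (B1 \<times> B2) (tensor_bm m1 m2) (vtensor v1 v2) (vtensor w1 w2)
     = vtensor (vmul B1 m1 v1 w1) (vmul B2 m2 v2 w2)"
proof (rule ext, clarify)
  fix b1 b2
  define I1 where "I1 p q = (if snd (m1 p q) = b1 then fst (m1 p q) else 0)" for p q
  define I2 where "I2 p q = (if snd (m2 p q) = b2 then fst (m2 p q) else 0)" for p q
  have "vmul (B1 \<times> B2) (tensor_bm m1 m2) (vtensor v1 v2) (vtensor w1 w2) (b1, b2)
     = (\<Sum>p1\<in>B1. \<Sum>p2\<in>B2. \<Sum>q1\<in>B1. \<Sum>q2\<in>B2. (v1 p1 * w1 q1 * I1 p1 q1) * (v2 p2 * w2 q2 * I2 p2 q2))"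
    unfolding vmul_expand sum_prod2
    by (intro sum.cong refl) (simp add: vtensor_def tensor_bm_def I1_def I2_def)
  also have "\<dots> = (\<Sum>p1\<in>B1. \<Sum>q1\<in>B1. \<Sum>p2\<in>B2. \<Sum>q2\<in>B2. (v1 p1 * w1 q1 * I1 p1 q1) * (v2 p2 * w2 q2 * I2 p2 q2))"
    by (intro sum.cong refl) (rule sum.swap)
  also have "\<dots> = (\<Sum>p1\<in>B1. \<Sum>q1\<in>B1. v1 p1 * w1 q1 * I1 p1 q1) * (\<Sum>p2\<in>B2. \<Sum>q2\<in>B2. v2 p2 * w2 q2 * I2 p2 q2)"
    by (simp only: sum_distrib_right, simp only: sum_distrib_left)
  also have "\<dots> = vtensor (vmul B1 m1 v1 w1) (vmul B2 m2 v2 w2) (b1, b2)"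
    by (simp add: vtensor_def vmul_expand I1_def I2_def)
  finally show "vmul (B1 \<times> B2) (tensor_bm m1 m2) (vtensor v1 v2) (vtensor w1 w2) (b1, b2) = vtensor (vmul B1 m1 v1 w1) (vmul B2 m2 v2 w2) (b1, b2)" .
qed

lemma vtensor_add_l: "vtensor (v + v') w = vtensor v w + vtensor v' w"
  by (rule ext) (auto simp: vtensor_def fun_app algebra_simps)
lemma vtensor_add_r: "vtensor w (v + v') = vtensor w v + vtensor w v'"
  by (rule ext) (auto simp: vtensor_def fun_app algebra_simps)
lemma vtensor_diff_l: "vtensor (v - v') w = vtensor v w - vtensor v' w"
  by (rule ext) (auto simp: vtensor_def fun_app algebra_simps)
lemma vtensor_diff_r: "vtensor w (v - v') = vtensor w v - vtensor w v'"
  by (rule ext) (auto simp: vtensor_def fun_app algebra_simps)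
lemma vtensor_sc_l: "vtensor (sc c v) w = sc c (vtensor v w)"
  by (rule ext) (auto simp: vtensor_def sc_apply algebra_simps)
lemma vtensor_sc_r: "vtensor w (sc c v) = sc c (vtensor w v)"
  by (rule ext) (auto simp: vtensor_def sc_apply algebra_simps)
lemma vtensor_zero_l: "vtensor 0 w = 0"
  by (rule ext) (auto simp: vtensor_def fun_app)
lemma vtensor_zero_r: "vtensor w 0 = 0"
  by (rule ext) (auto simp: vtensor_def fun_app)
lemma vtensor_sum_l: "vtensor (\<Sum>i\<in>I. f i) w = (\<Sum>i\<in>I. vtensor (f i) w)"
  by (rule ext) (auto simp: vtensor_def sum_fun_apply sum_distrib_right)
lemma vtensor_sum_r: "vtensor w (\<Sum>i\<in>I. f i) = (\<Sum>i\<in>I. vtensor w (f i))"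
  by (rule ext) (auto simp: vtensor_def sum_fun_apply sum_distrib_left)
lemma vtensor_vunit: "vtensor (vunit p) (vunit q) = vunit (p, q)"
  by (rule ext) (auto simp: vtensor_def vunit_def split: if_splits)
lemma supp_vtensor: "supp_in B1 v \<Longrightarrow> supp_in B2 w \<Longrightarrow> supp_in (B1 \<times> B2) (vtensor (v::_\<Rightarrow>'k::field) w)"
  by (auto simp: supp_in_def vtensor_def)

lemma balg_tensor:
  assumes "balg B1 m1 e1" "balg B2 m2 e2"
  shows "balg (B1 \<times> B2) (tensor_bm m1 m2) (e1, e2)"
proof -
  interpret A1: balg B1 m1 e1 by fact
  interpret A2: balg B2 m2 e2 by fact
  show ?thesis
  proof
    show "finite (B1 \<times> B2)" using A1.fin A2.fin by simp
    show "(e1, e2) \<in> B1 \<times> B2" using A1.e_in A2.e_in by simp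
    show "snd (tensor_bm m1 m2 p q) \<in> B1 \<times> B2" if "p \<in> B1 \<times> B2" "q \<in> B1 \<times> B2" for p q
      using that A1.closed A2.closed by (auto simp: tensor_bm_def)
    show "tensor_bm m1 m2 (e1, e2) p = (1, p)" if "p \<in> B1 \<times> B2" for p
      using that A1.unit_l A2.unit_l by (auto simp: tensor_bm_def)
    show "tensor_bm m1 m2 p (e1, e2) = (1, p)" if "p \<in> B1 \<times> B2" for p
      using that A1.unit_r A2.unit_r by (auto simp: tensor_bm_def)
    fix p q s assume "p \<in> B1 \<times> B2" "q \<in> B1 \<times> B2" "s \<in> B1 \<times> B2"
    then obtain p1 p2 q1 q2 s1 s2 where P: "p = (p1, p2)" "q = (q1, q2)" "s = (s1, s2)"
      and M: "p1 \<in> B1" "q1 \<in> B1" "s1 \<in> B1" "p2 \<in> B2" "q2 \<in> B2" "s2 \<in> B2" by auto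
    show "fst (tensor_bm m1 m2 p q) * fst (tensor_bm m1 m2 (snd (tensor_bm m1 m2 p q)) s) =
          fst (tensor_bm m1 m2 q s) * fst (tensor_bm m1 m2 p (snd (tensor_bm m1 m2 q s))) \<and>
          (fst (tensor_bm m1 m2 p q) * fst (tensor_bm m1 m2 (snd (tensor_bm m1 m2 p q)) s) \<noteq> 0 \<longrightarrow>
           snd (tensor_bm m1 m2 (snd (tensor_bm m1 m2 p q)) s) = snd (tensor_bm m1 m2 p (snd (tensor_bm m1 m2 q s))))"
    proof -
      let ?c1 = "fst (m1 p1 q1) * fst (m1 (snd (m1 p1 q1)) s1)"
      let ?c2 = "fst (m2 p2 q2) * fst (m2 (snd (m2 p2 q2)) s2)"
      have e1: "fst (tensor_bm m1 m2 p q) * fst (tensor_bm m1 m2 (snd (tensor_bm m1 m2 p q)) s) = ?c1 * ?c2"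
        unfolding P by (simp add: tensor_bm_def)
      have e2: "fst (tensor_bm m1 m2 q s) * fst (tensor_bm m1 m2 p (snd (tensor_bm m1 m2 q s)))
          = (fst (m1 q1 s1) * fst (m1 p1 (snd (m1 q1 s1)))) * (fst (m2 q2 s2) * fst (m2 p2 (snd (m2 q2 s2))))"
        unfolding P by (simp add: tensor_bm_def)
      have s1: "snd (tensor_bm m1 m2 (snd (tensor_bm m1 m2 p q)) s) = (snd (m1 (snd (m1 p1 q1)) s1), snd (m2 (snd (m2 p2 q2)) s2))"
        unfolding P by (simp add: tensor_bm_def)
      have s2: "snd (tensor_bm m1 m2 p (snd (tensor_bm m1 m2 q s))) = (snd (m1 p1 (snd (m1 q1 s1))), snd (m2 p2 (snd (m2 q2 s2))))"
        unfolding P by (simp add: tensor_bm_def)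
      show ?thesis unfolding e1 e2 s1 s2 using A1.assoc[OF M(1-3)] A2.assoc[OF M(4-6)] by auto
    qed
  qed
qed


lemma vpow_tensor:
  "vpow (B1 \<times> B2) (tensor_bm m1 m2) (e1, e2) (vtensor v w) k
     = vtensor (vpow B1 m1 e1 v k) (vpow B2 m2 e2 w k)"
  by (induction k) (simp_all add: vpow_def vtensor_vunit vtensor_mul)

definition reassoc :: "(('a \<times> 'b) \<times> 'c \<Rightarrow> 'k) \<Rightarrow> ('a \<times> ('b \<times> 'c) \<Rightarrow> 'k)" where
  "reassoc X = (\<lambda>(p1, (p2, l)). X ((p1, p2), l))"

lemma reassoc_apply: "reassoc X (a, (b, c)) = X ((a, b), c)" by (simp add: reassoc_def)

lemma reassoc_mul:
  "vmul (B1 \<times> (B2 \<times> B3)) (tensor_bm m1 (tensor_bm m2 m3)) (reassoc X) (reassoc Y)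
   = reassoc (vmul ((B1 \<times> B2) \<times> B3) (tensor_bm (tensor_bm m1 m2) m3) X Y)"
  by (rule ext, clarify) (simp add: vmul_expand sum_prod2 reassoc_apply mult.assoc cong: if_cong)

lemma reassoc_add: "reassoc (X + Y) = reassoc X + reassoc Y"
  by (rule ext, clarify) (simp add: reassoc_apply fun_app)
lemma reassoc_diff: "reassoc (X - Y) = reassoc X - reassoc Y"
  by (rule ext, clarify) (simp add: reassoc_apply fun_app)
lemma reassoc_sc: "reassoc (sc c X) = sc c (reassoc X)"
  by (rule ext, clarify) (simp add: reassoc_apply sc_apply)
lemma reassoc_zero: "reassoc 0 = 0"
  by (rule ext, clarify) (simp add: reassoc_apply fun_app)
lemma reassoc_tensor: "reassoc (vtensor (vtensor a b) c) = vtensor a (vtensor b c)"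
  by (rule ext, clarify) (simp add: reassoc_apply vtensor_apply mult.assoc)
lemma reassoc_vunit: "reassoc (vunit ((a, b), c)) = vunit (a, (b, c))"
  by (rule ext, clarify) (auto simp add: reassoc_apply vunit_def)



lemma lin_cong_f: "(\<And>p. p \<in> B \<Longrightarrow> f p = g p) \<Longrightarrow> lin B f v = lin B g v"
  by (rule ext) (simp add: lin_def)

lemma pow_mod_eq: "(w::'a::monoid_mult) ^ n = 1 \<Longrightarrow> w ^ k = w ^ (k mod n)"
proof -
  assume h: "w ^ n = 1"
  have "w ^ k = w ^ (n * (k div n) + k mod n)" by simp
  also have "\<dots> = (w ^ n) ^ (k div n) * w ^ (k mod n)" by (simp only: power_add power_mult)
  finally show ?thesis using h by simp
qed

locale taft_ctx =
  fixes n :: nat and \<omega> :: "'k::field"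
  assumes n2: "2 \<le> n" and om: "\<omega> ^ n = 1"
begin

lemma npos: "0 < n" using n2 by simp
lemma om_nz: "\<omega> \<noteq> 0" using om npos by (metis power_0_left zero_neq_one npos[THEN less_not_refl2])
lemma q_n: "inverse \<omega> ^ n = 1" using om by (simp add: power_inverse)

lemma q_mod: "inverse \<omega> ^ k = inverse \<omega> ^ (k mod n)" using pow_mod_eq[OF q_n] .
lemma om_mod: "\<omega> ^ k = \<omega> ^ (k mod n)" using pow_mod_eq[OF om] .

lemma balg_H: "balg (taft_basis n) (taft_bm n \<omega>) (0, 0)"
proof
  show "finite (taft_basis n)" by (simp add: taft_basis_def)
  show "(0, 0) \<in> taft_basis n" using npos by (simp add: taft_basis_def)
  show "snd (taft_bm n \<omega> p q) \<in> taft_basis n" if "p \<in> taft_basis n" "q \<in> taft_basis n" for p q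
    using that npos by (auto simp: taft_basis_def taft_bm_def)
  show "taft_bm n \<omega> (0, 0) p = (1, p)" if "p \<in> taft_basis n" for p
    using that by (auto simp: taft_basis_def taft_bm_def)
  show "taft_bm n \<omega> p (0, 0) = (1, p)" if "p \<in> taft_basis n" for p
    using that by (auto simp: taft_basis_def taft_bm_def)
  fix p q s assume "p \<in> taft_basis n" "q \<in> taft_basis n" "s \<in> taft_basis n"
  then obtain i j k l a b where P: "p = (i, j)" "q = (k, l)" "s = (a, b)"
    and M: "i < n" "j < n" "k < n" "l < n" "a < n" "b < n" by (auto simp: taft_basis_def)
  have c1: "inverse \<omega> ^ (j * k) * inverse \<omega> ^ (((j + l) mod n) * a) = inverse \<omega> ^ (l * a) * inverse \<omega> ^ (j * (k + a))"
  proof -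
    have "inverse \<omega> ^ (((j + l) mod n) * a) = inverse \<omega> ^ ((j + l) * a)"
      by (subst (1 2) q_mod) (simp add: mod_mult_left_eq)
    then show ?thesis by (simp add: power_add[symmetric] algebra_simps)
  qed
  have i1: "(((j + l) mod n) + b) mod n = (j + (l + b) mod n) mod n"
    by (simp add: mod_add_left_eq mod_add_right_eq add.assoc)
  show "fst (taft_bm n \<omega> p q) * fst (taft_bm n \<omega> (snd (taft_bm n \<omega> p q)) s) =
        fst (taft_bm n \<omega> q s) * fst (taft_bm n \<omega> p (snd (taft_bm n \<omega> q s))) \<and>
        (fst (taft_bm n \<omega> p q) * fst (taft_bm n \<omega> (snd (taft_bm n \<omega> p q)) s) \<noteq> 0 \<longrightarrow>
         snd (taft_bm n \<omega> (snd (taft_bm n \<omega> p q)) s) = snd (taft_bm n \<omega> p (snd (taft_bm n \<omega> q s))))"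
    unfolding P using c1 i1 by (auto simp: taft_bm_def add.assoc)
qed

lemma balg_A: "balg (A_basis n) (A_bm n \<omega>) 0"
proof
  show "finite (A_basis n)" by (simp add: A_basis_def)
  show "0 \<in> A_basis n" using npos by (simp add: A_basis_def)
  show "snd (A_bm n \<omega> p q) \<in> A_basis n" if "p \<in> A_basis n" "q \<in> A_basis n" for p q
    using that npos by (auto simp: A_basis_def A_bm_def)
  show "A_bm n \<omega> 0 p = (1, p)" if "p \<in> A_basis n" for p
    using that by (auto simp: A_basis_def A_bm_def)
  show "A_bm n \<omega> p 0 = (1, p)" if "p \<in> A_basis n" for p
    using that by (auto simp: A_basis_def A_bm_def)
  fix k l s assume "k \<in> A_basis n" "l \<in> A_basis n" "s \<in> A_basis n"
  then have M: "k < n" "l < n" "s < n" by (auto simp: A_basis_def)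
  have i1: "((k + l) mod n + s) mod n = (k + (l + s) mod n) mod n"
    by (simp add: mod_add_left_eq mod_add_right_eq add.assoc)
  have c: "(if k + l < n then 1 else \<omega>) * (if (k + l) mod n + s < n then 1 else \<omega>) =
        (if l + s < n then 1 else \<omega>) * (if k + (l + s) mod n < n then 1 else \<omega>)"
  proof (cases "k + l < n"; cases "l + s < n")
    assume "k + l < n" "l + s < n" then show ?thesis by simp
  next
    assume a: "k + l < n" "\<not> l + s < n"
    then have "(l + s) mod n = l + s - n" using M by (simp add: le_mod_geq)
    then show ?thesis using a M by auto
  next
    assume a: "\<not> k + l < n" "l + s < n"
    then have "(k + l) mod n = k + l - n" using M by (simp add: le_mod_geq)
    then show ?thesis using a M by auto
  next
    assume a: "\<not> k + l < n" "\<not> l + s < n"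
    then have "(k + l) mod n = k + l - n" "(l + s) mod n = l + s - n" using M by (simp_all add: le_mod_geq)
    then show ?thesis using a M by auto
  qed
  show "fst (A_bm n \<omega> k l) * fst (A_bm n \<omega> (snd (A_bm n \<omega> k l)) s) =
        fst (A_bm n \<omega> l s) * fst (A_bm n \<omega> k (snd (A_bm n \<omega> l s))) \<and>
        (fst (A_bm n \<omega> k l) * fst (A_bm n \<omega> (snd (A_bm n \<omega> k l)) s) \<noteq> 0 \<longrightarrow>
         snd (A_bm n \<omega> (snd (A_bm n \<omega> k l)) s) = snd (A_bm n \<omega> k (snd (A_bm n \<omega> l s))))"
    using c i1 by (simp add: A_bm_def)
qed


abbreviation "TB \<equiv> taft_basis n"
abbreviation "tm \<equiv> taft_bm n \<omega>"
abbreviation "AB \<equiv> A_basis n"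
abbreviation "am \<equiv> A_bm n \<omega>"

sublocale H: balg TB tm "(0, 0)" by (rule balg_H)
sublocale A: balg AB am 0 by (rule balg_A)
sublocale HA: balg "TB \<times> AB" "tensor_bm tm am" "((0, 0), 0)" by (rule balg_tensor[OF balg_H balg_A])
sublocale HH: balg "TB \<times> TB" "tensor_bm tm tm" "((0, 0), (0, 0))" by (rule balg_tensor[OF balg_H balg_H])
sublocale HHA: balg "TB \<times> (TB \<times> AB)" "tensor_bm tm (tensor_bm tm am)" "((0, 0), ((0, 0), 0))"
  by (rule balg_tensor[OF balg_H balg_tensor[OF balg_H balg_A]])
sublocale HHA': balg "(TB \<times> TB) \<times> AB" "tensor_bm (tensor_bm tm tm) am" "(((0, 0), (0, 0)), 0)"
  by (rule balg_tensor[OF balg_tensor[OF balg_H balg_H] balg_A])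

lemma TB_iff[simp]: "(i, j) \<in> TB \<longleftrightarrow> i < n \<and> j < n" by (simp add: taft_basis_def)
lemma AB_iff[simp]: "k \<in> AB \<longleftrightarrow> k < n" by (simp add: A_basis_def)

lemma Hmul: "i < n \<Longrightarrow> j < n \<Longrightarrow> k < n \<Longrightarrow> l < n \<Longrightarrow>
  vmul TB tm (vunit (i, j)) (vunit (k, l)) = (if i + k < n then sc (inverse \<omega> ^ (j * k)) (vunit (i + k, (j + l) mod n)) else 0)"
  by (simp add: vmul_unit H.fin taft_bm_def)

lemma Amul: "k < n \<Longrightarrow> l < n \<Longrightarrow>
  vmul AB am (vunit k) (vunit l) = sc (if k + l < n then 1 else \<omega>) (vunit ((k + l) mod n))"
  by (simp add: vmul_unit A.fin A_bm_def)

lemma xpow: "i < n \<Longrightarrow> vpow TB tm (0, 0) taft_x i = vunit (i, 0)"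
proof (induction i)
  case 0 then show ?case by (simp add: H.pow_0)
next
  case (Suc i) then show ?case using n2 by (simp add: H.pow_Suc taft_x_def Hmul)
qed

lemma xpow_n: "vpow TB tm (0, 0) taft_x n = 0"
proof -
  obtain k where k: "n = Suc k" using npos by (cases n) auto
  then have "k < n" by simp
  have "vpow TB tm (0, 0) taft_x n = vmul TB tm taft_x (vpow TB tm (0, 0) taft_x k)"
    using k H.pow_Suc by simp
  also have "\<dots> = 0"
  proof -
    have "\<not> 1 + k < n" "1 < n" using k n2 by auto
    then show ?thesis using \<open>k < n\<close> by (simp only: xpow[OF \<open>k < n\<close>]) (simp add: taft_x_def Hmul)
  qed
  finally show ?thesis .
qed

lemma gpow: "vpow TB tm (0, 0) taft_g j = vunit (0, j mod n)"
proof (induction j)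
  case 0 then show ?case by (simp add: H.pow_0)
next
  case (Suc j) then show ?case using n2 by (simp add: H.pow_Suc taft_g_def Hmul mod_Suc_eq)
qed

lemma ginv_eq: "taft_ginv n \<omega> = vunit (0, n - 1)"
  using n2 by (simp add: taft_ginv_def gpow)

lemma upow: "k < n \<Longrightarrow> vpow AB am 0 A_u k = vunit k"
proof (induction k)
  case 0 then show ?case by (simp add: A.pow_0)
next
  case (Suc k) then show ?case using n2 by (simp add: A.pow_Suc A_u_def Amul)
qed

lemma upow_n: "vpow AB am 0 A_u n = sc \<omega> (vunit 0)"
proof -
  obtain k where k: "n = Suc k" using npos by (cases n) auto
  then have "k < n" by simp
  have "vpow AB am 0 A_u n = vmul AB am A_u (vpow AB am 0 A_u k)"
    using k A.pow_Suc by simp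
  also have "\<dots> = sc \<omega> (vunit 0)"
  proof -
    have "\<not> 1 + k < n" "1 < n" "(1 + k) mod n = 0" using k n2 by auto
    then show ?thesis using \<open>k < n\<close> by (simp only: upow[OF \<open>k < n\<close>]) (simp add: A_u_def Amul)
  qed
  finally show ?thesis .
qed


lemma HAmul: "i < n \<Longrightarrow> j < n \<Longrightarrow> k < n \<Longrightarrow> i' < n \<Longrightarrow> j' < n \<Longrightarrow> k' < n \<Longrightarrow>
  vmul (TB \<times> AB) (tensor_bm tm am) (vunit ((i, j), k)) (vunit ((i', j'), k')) =
   (if i + i' < n then sc (inverse \<omega> ^ (j * i') * (if k + k' < n then 1 else \<omega>))
       (vunit ((i + i', (j + j') mod n), (k + k') mod n)) else 0)"
  by (simp add: vmul_unit HA.fin taft_bm_def A_bm_def)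

lemma tri: "i * (i - 1) div 2 + i = Suc i * i div 2"
proof -
  have "Suc i * i = i * (i - 1) + 2 * i" by (cases i) (simp_all add: algebra_simps)
  then show ?thesis by simp
qed

definition "m1 = n - 1"
lemma m1_lt[simp]: "m1 < n" using npos by (simp add: m1_def)
lemma m1_Suc: "Suc m1 = n" using npos by (simp add: m1_def)
lemma m1_pos: "0 < m1" using n2 by (simp add: m1_def)

lemma q_pow: "inverse \<omega> ^ (m1 * i) = \<omega> ^ i"
proof -
  have "\<omega> ^ (m1 * i) * \<omega> ^ i = \<omega> ^ (n * i)"
  proof -
    have "m1 * i + i = n * i" by (metis m1_Suc mult_Suc add.commute)
    then show ?thesis by (simp add: power_add[symmetric])
  qed
  also have "\<dots> = 1" by (simp add: power_mult om)
  finally have "\<omega> ^ (m1 * i) * \<omega> ^ i = 1" .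
  then show ?thesis using om_nz by (simp add: power_inverse[symmetric] field_simps)
qed

definition "c0 = \<omega> * (\<omega> - 1)"
definition "xg = (vunit (1, m1) :: nat \<times> nat \<Rightarrow> 'k)"
definition "gi = (vunit (0, m1) :: nat \<times> nat \<Rightarrow> 'k)"
definition "TT = sc c0 (vtensor xg (vunit 1))"
definition "GG = vtensor gi (vunit (1::nat))"

lemma TT_eq: "TT = sc c0 (vunit ((1, m1), 1))" by (simp add: TT_def xg_def vtensor_vunit)
lemma GG_eq: "GG = vunit ((0, m1), 1)" by (simp add: GG_def gi_def vtensor_vunit)

lemma TTpow: "i < n \<Longrightarrow> vpow (TB \<times> AB) (tensor_bm tm am) ((0, 0), 0) TT i
   = sc (c0 ^ i * \<omega> ^ (i * (i - 1) div 2)) (vunit ((i, (m1 * i) mod n), i))"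
proof (induction i)
  case 0 then show ?case by (simp add: HA.pow_0)
next
  case (Suc i)
  then have i: "i < n" "Suc i < n" by auto
  have r: "(m1 * i) mod n < n" using npos by simp
  have idx: "(m1 + m1 * i mod n) mod n = m1 * Suc i mod n"
    by (metis mod_add_right_eq mult_Suc_right)
  have "vpow (TB \<times> AB) (tensor_bm tm am) ((0, 0), 0) TT (Suc i) =
    sc (c0 * (c0 ^ i * \<omega> ^ (i * (i - 1) div 2))) (vmul (TB \<times> AB) (tensor_bm tm am) (vunit ((1, m1), 1)) (vunit ((i, (m1 * i) mod n), i)))"
    using Suc by (simp add: HA.pow_Suc TT_eq vmul_sc_l vmul_sc_r mult.commute)
  also have "\<dots> = sc (c0 * (c0 ^ i * \<omega> ^ (i * (i - 1) div 2)) * \<omega> ^ i) (vunit ((Suc i, m1 * Suc i mod n), Suc i))"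
    using i r npos by (simp add: HAmul idx q_pow)
  also have "c0 * (c0 ^ i * \<omega> ^ (i * (i - 1) div 2)) * \<omega> ^ i = c0 ^ Suc i * \<omega> ^ (Suc i * (Suc i - 1) div 2)"
  proof -
    have e: "Suc i * (Suc i - 1) div 2 = i * (i - 1) div 2 + i" using tri[of i] by simp
    show ?thesis by (simp only: e power_add power_Suc mult_ac)
  qed
  finally show ?case .
qed

lemma TTpow_n: "vpow (TB \<times> AB) (tensor_bm tm am) ((0, 0), 0) TT n = 0"
proof -
  obtain k where k: "n = Suc k" using npos by (cases n) auto
  then have kn: "k < n" by simp
  have "vpow (TB \<times> AB) (tensor_bm tm am) ((0, 0), 0) TT n = vmul (TB \<times> AB) (tensor_bm tm am) TT (vpow (TB \<times> AB) (tensor_bm tm am) ((0, 0), 0) TT k)"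
    by (metis HA.pow_Suc k)
  also have "\<dots> = 0"
  proof -
    have a: "\<not> 1 + k < n" "1 < n" "(m1 * k) mod n < n" using k n2 npos by simp_all
    have "vmul (TB \<times> AB) (tensor_bm tm am) (vunit ((1, m1), 1)) (vunit ((k, (m1 * k) mod n), k)) = 0"
      using a kn by (subst HAmul) simp_all
    then show ?thesis by (simp only: TTpow[OF kn], simp only: TT_eq vmul_sc_l vmul_sc_r sc_zero)
  qed
  finally show ?thesis .
qed


lemma idx_m1: "(m1 + m1 * k mod n) mod n = m1 * Suc k mod n"
  by (metis mod_add_right_eq mult_Suc_right)

lemma gipow: "vpow TB tm (0, 0) gi k = vunit (0, (m1 * k) mod n)"
proof (induction k)
  case 0 then show ?case by (simp add: H.pow_0)
next
  case (Suc k) then show ?case using npos by (simp add: H.pow_Suc gi_def Hmul idx_m1)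
qed

lemma ginv_gi: "taft_ginv n \<omega> = gi"
  by (simp add: ginv_eq gi_def m1_def)

lemma coef_a_eq: "coef_a \<omega> i = c0 ^ i * \<omega> ^ (i * (i - 1) div 2)"
proof -
  have e: "i * (i + 1) div 2 = i * (i - 1) div 2 + i" using tri[of i] by (simp add: mult.commute)
  show ?thesis unfolding coef_a_def c0_def e by (simp add: power_add power_mult_distrib mult_ac)
qed

lemma rho_term: "i < n \<Longrightarrow>
  vtensor (vmul TB tm (vpow TB tm (0, 0) taft_x i) (vpow TB tm (0, 0) (taft_ginv n \<omega>) (Suc i)))
          (vpow AB am 0 A_u (Suc i))
  = sc (if Suc i < n then 1 else \<omega>) (vunit ((i, m1 * Suc i mod n), Suc i mod n))"
proof -
  assume i: "i < n"
  have h: "vmul TB tm (vpow TB tm (0, 0) taft_x i) (vpow TB tm (0, 0) (taft_ginv n \<omega>) (Suc i)) = vunit (i, m1 * Suc i mod n)"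
    using i npos by (simp add: xpow ginv_gi gipow Hmul)
  show ?thesis
  proof (cases "Suc i < n")
    case True then show ?thesis using h by (simp add: upow vtensor_vunit)
  next
    case False
    then have "Suc i = n" using i by simp
    then show ?thesis using h by (simp add: upow_n vtensor_sc_r vtensor_vunit)
  qed
qed

lemma TTG: "i < n \<Longrightarrow> vmul (TB \<times> AB) (tensor_bm tm am) (vpow (TB \<times> AB) (tensor_bm tm am) ((0, 0), 0) TT i) GG
  = sc (c0 ^ i * \<omega> ^ (i * (i - 1) div 2) * (if Suc i < n then 1 else \<omega>)) (vunit ((i, m1 * Suc i mod n), Suc i mod n))"
proof -
  assume i: "i < n"
  have e: "(m1 * i mod n + m1) mod n = m1 * Suc i mod n" using idx_m1[of i] by (simp add: add.commute)
  have r: "m1 * i mod n < n" using npos by simp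
  show ?thesis using i npos r n2
    by (simp only: TTpow[OF i] GG_eq vmul_sc_l) (simp add: HAmul e)
qed

lemma rho_u_eq: "rho_u n \<omega> = (\<Sum>i<n. vmul (TB \<times> AB) (tensor_bm tm am) (vpow (TB \<times> AB) (tensor_bm tm am) ((0, 0), 0) TT i) GG)"
proof -
  have "rho_u n \<omega> = (\<Sum>i<n. sc (coef_a \<omega> i) (vtensor (vmul TB tm (vpow TB tm (0, 0) taft_x i) (vpow TB tm (0, 0) (taft_ginv n \<omega>) (Suc i)))
          (vpow AB am 0 A_u (Suc i))))"
    unfolding rho_u_def by (rule ext) (simp add: sum_fun_apply sc_apply)
  also have "\<dots> = (\<Sum>i<n. vmul (TB \<times> AB) (tensor_bm tm am) (vpow (TB \<times> AB) (tensor_bm tm am) ((0, 0), 0) TT i) GG)"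
    by (intro sum.cong refl) (simp only: rho_term TTG coef_a_eq lessThan_iff, simp add: mult_ac)
  finally show ?thesis .
qed


abbreviation "HAB \<equiv> TB \<times> AB"
abbreviation "ham \<equiv> tensor_bm tm am"
abbreviation "oneHA \<equiv> (vunit ((0, 0), 0) :: (nat \<times> nat) \<times> nat \<Rightarrow> 'k)"
abbreviation "RR \<equiv> rho_u n \<omega>"

lemma supp_TT: "supp_in HAB TT" using n2 by (simp add: TT_eq supp_sc supp_vunit)
lemma supp_GG: "supp_in HAB GG" using n2 by (simp add: GG_eq supp_vunit)
lemma supp_RR: "supp_in HAB RR"
  unfolding rho_u_eq by (intro supp_sum HA.supp_mul)

lemma one_minus_T_RR: "vmul HAB ham (oneHA - TT) RR = GG"
  unfolding rho_u_eq using HA.telescope[OF supp_GG, of TT n] by (simp add: TTpow_n vmul_zero_l)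

lemma GT: "vmul HAB ham GG TT = sc \<omega> (vmul HAB ham TT GG)"
proof -
  have a: "1 < n" "(m1 + m1) mod n < n" using n2 by simp_all
  show ?thesis using a by (simp add: GG_eq TT_eq vmul_sc_l vmul_sc_r HAmul q_pow[of 1, simplified] mult_ac)
qed

definition ev :: "'k poly \<Rightarrow> (nat \<times> nat) \<times> nat \<Rightarrow> 'k" where
  "ev p = fold_coeffs (\<lambda>a r. sc a oneHA + vmul HAB ham TT r) p 0"

lemma ev_0[simp]: "ev 0 = 0" by (simp add: ev_def)

lemma ev_pCons: "ev (pCons a p) = sc a oneHA + vmul HAB ham TT (ev p)"
proof (cases "a = 0 \<and> p = 0")
  case True then show ?thesis by (simp add: ev_def vmul_zero_r)
next
  case False
  then show ?thesis unfolding ev_def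
    by (cases "a = 0") (simp_all add: fold_coeffs_pCons_coeff_not_0_eq fold_coeffs_pCons_not_0_0_eq)
qed

lemma supp_ev: "supp_in HAB (ev p)"
  by (induction p) (simp_all add: ev_pCons supp_zero supp_add supp_sc HA.supp_one HA.supp_mul)

lemma ev_add: "ev (p + q) = ev p + ev q"
proof (induction p arbitrary: q)
  case 0 then show ?case by simp
next
  case (pCons a p)
  show ?case
  proof (cases q rule: pCons_cases)
    case (pCons b q')
    then show ?thesis using pCons.IH[of q'] by (simp add: ev_pCons sc_add_l vmul_add_r algebra_simps)
  qed
qed

lemma ev_smult: "ev (smult c p) = sc c (ev p)"
  by (induction p) (simp_all add: ev_pCons sc_add vmul_sc_r mult.commute)

lemma ev_mult: "ev (p * q) = vmul HAB ham (ev p) (ev q)"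
proof (induction p)
  case 0 then show ?case by (simp add: vmul_zero_l)
next
  case (pCons a p)
  show ?case using pCons.IH
    by (simp add: ev_pCons ev_add ev_smult vmul_add_l vmul_sc_l HA.one_l supp_ev HA.mul_assoc)
qed

lemma ev_1: "ev 1 = oneHA"
  by (simp add: one_pCons ev_pCons vmul_zero_r)

lemma ev_monom: "ev (monom 1 k) = vpow HAB ham ((0, 0), 0) TT k"
proof (induction k)
  case 0 then show ?case by (simp add: HA.pow_0 ev_1 flip: one_poly_def)
next
  case (Suc k) then show ?case by (simp add: monom_Suc ev_pCons HA.pow_Suc)
qed

lemma ev_diff: "ev (p - q) = ev p - ev q"
  using ev_add[of "p - q" q] by (simp add: algebra_simps)

lemma ev_lin: "ev [:1, c:] = oneHA + sc c TT"
  by (simp add: ev_pCons vmul_sc_r HA.one_r supp_TT vmul_zero_r vmul_add_r)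

lemma G_ev: "vmul HAB ham GG (ev p) = vmul HAB ham (ev (pcompose p [:0, \<omega>:])) GG"
proof (induction p)
  case 0 then show ?case by (simp add: vmul_zero_r vmul_zero_l)
next
  case (pCons a p)
  have r: "ev [:0, \<omega>:] = sc \<omega> TT"
    by (simp add: ev_pCons vmul_sc_r HA.one_r supp_TT vmul_zero_r vmul_add_r)
  have "vmul HAB ham GG (ev (pCons a p)) = sc a GG + sc \<omega> (vmul HAB ham TT (vmul HAB ham GG (ev p)))"
    by (simp add: ev_pCons vmul_add_r vmul_sc_r HA.one_r supp_GG HA.mul_assoc[symmetric] GT vmul_sc_l)
  also have "\<dots> = vmul HAB ham (ev (pcompose (pCons a p) [:0, \<omega>:])) GG"
    using pCons.IH
    by (simp add: pcompose_pCons ev_add ev_mult r vmul_add_l vmul_sc_l vmul_sc_r HA.one_l supp_GG HA.mul_assoc ev_pCons ev_smult)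
  finally show ?case .
qed


lemma pcomp_lin: "pcompose [:1, c:] [:0, \<omega>:] = [:1, c * \<omega>:]"
  by (simp add: pcompose_pCons)

lemma pcomp_prodP: "pcompose (\<Prod>j<k. [:1, - (\<omega> ^ j):]) [:0, \<omega>:] = (\<Prod>j<k. [:1, - (\<omega> ^ Suc j):])"
  by (simp add: pcompose_prod pcomp_lin mult.commute)

lemma RRpow: "vmul HAB ham (ev (\<Prod>j<k. [:1, - (\<omega> ^ j):])) (vpow HAB ham ((0, 0), 0) RR k) = vpow HAB ham ((0, 0), 0) GG k"
proof (induction k)
  case 0 then show ?case by (simp add: ev_1 HA.pow_0 HA.one_l HA.supp_one)
next
  case (Suc k)
  let ?P = "\<Prod>j<k. [:1, - (\<omega> ^ j):]"
  let ?P' = "\<Prod>j<k. [:1, - (\<omega> ^ Suc j):]"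
  have pp: "(\<Prod>j<Suc k. [:1, - (\<omega> ^ j):]) = ?P' * [:1, - 1:]"
    by (simp only: prod.lessThan_Suc_shift power_0) (rule mult.commute)
  have ev1: "ev [:1, - 1:] = oneHA - TT"
  proof -
    have "sc (- 1) TT = - TT" by (rule ext) (simp add: sc_apply)
    then show ?thesis using ev_lin[of "- 1"] by simp
  qed
  have "vmul HAB ham (ev (\<Prod>j<Suc k. [:1, - (\<omega> ^ j):])) (vpow HAB ham ((0, 0), 0) RR (Suc k))
      = vmul HAB ham (ev ?P') (vmul HAB ham (vmul HAB ham (oneHA - TT) RR) (vpow HAB ham ((0, 0), 0) RR k))"
    by (simp only: pp ev_mult ev1 HA.pow_Suc HA.mul_assoc)
  also have "\<dots> = vmul HAB ham (vmul HAB ham (ev ?P') GG) (vpow HAB ham ((0, 0), 0) RR k)"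
    by (simp only: one_minus_T_RR HA.mul_assoc)
  also have "\<dots> = vmul HAB ham GG (vmul HAB ham (ev ?P) (vpow HAB ham ((0, 0), 0) RR k))"
  proof -
    have "vmul HAB ham GG (vmul HAB ham (ev ?P) (vpow HAB ham ((0, 0), 0) RR k)) = vmul HAB ham (vmul HAB ham GG (ev ?P)) (vpow HAB ham ((0, 0), 0) RR k)"
      by (simp only: HA.mul_assoc)
    also have "\<dots> = vmul HAB ham (vmul HAB ham (ev ?P') GG) (vpow HAB ham ((0, 0), 0) RR k)"
      by (simp only: G_ev pcomp_prodP)
    finally show ?thesis by (simp only: HA.mul_assoc)
  qed
  also have "\<dots> = vpow HAB ham ((0, 0), 0) GG (Suc k)"
    by (simp only: Suc.IH HA.pow_Suc)
  finally show ?case .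
qed

lemma prodP_n:
  assumes prim: "\<And>k. 0 < k \<Longrightarrow> k < n \<Longrightarrow> \<omega> ^ k \<noteq> 1"
  shows "(\<Prod>j<n. [:1, - (\<omega> ^ j):]) = 1 - monom 1 n"
proof (rule poly_eqI_degree)
  let ?A = "insert 0 ((\<lambda>i. \<omega> ^ i) ` {..<n})"
  have inj: "inj_on (\<lambda>i. \<omega> ^ i) {..<n}"
  proof (rule inj_onI)
    fix i j assume ij: "i \<in> {..<n}" "j \<in> {..<n}" "\<omega> ^ i = \<omega> ^ j"
    show "i = j"
    proof (rule ccontr)
      assume "i \<noteq> j"
      then consider "i < j" | "j < i" by linarith
      then show False
      proof cases
        case 1
        then have "\<omega> ^ j = \<omega> ^ i * \<omega> ^ (j - i)" by (simp add: power_add[symmetric])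
        then have "\<omega> ^ (j - i) = 1" using ij(3) om_nz by simp
        moreover have "0 < j - i" "j - i < n" using 1 ij(2) by auto
        ultimately show False using prim by blast
      next
        case 2
        then have "\<omega> ^ i = \<omega> ^ j * \<omega> ^ (i - j)" by (simp add: power_add[symmetric])
        then have "\<omega> ^ (i - j) = 1" using ij(3) om_nz by simp
        moreover have "0 < i - j" "i - j < n" using 2 ij(1) by auto
        ultimately show False using prim by blast
      qed
    qed
  qed
  have "0 \<notin> (\<lambda>i. \<omega> ^ i) ` {..<n}" using om_nz by auto
  then have cA: "card ?A = Suc n" using inj by (simp add: card_image)
  have "degree (\<Prod>j<n. [:1, - (\<omega> ^ j):]) \<le> sum (degree \<circ> (\<lambda>j. [:1, - (\<omega> ^ j):])) {..<n}"
    by (rule degree_prod_sum_le) simp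
  also have "\<dots> \<le> sum (\<lambda>j. 1) {..<n}"
    by (intro sum_mono) simp
  finally have d1: "degree (\<Prod>j<n. [:1, - (\<omega> ^ j):]) \<le> n" by simp
  have d2: "degree (1 - monom 1 n :: 'k poly) \<le> n"
    by (intro degree_diff_le) (simp_all add: degree_monom_le)
  show "degree (\<Prod>j<n. [:1, - (\<omega> ^ j):]) < card ?A" using d1 cA by simp
  show "degree (1 - monom 1 n :: 'k poly) < card ?A" using d2 cA by simp
  fix x assume x: "x \<in> ?A"
  show "poly (\<Prod>j<n. [:1, - (\<omega> ^ j):]) x = poly (1 - monom 1 n) x"
  proof (cases "x = 0")
    case True then show ?thesis using npos by (simp add: poly_prod poly_monom)
  next
    case False
    then obtain i where i: "i < n" "x = \<omega> ^ i" using x by auto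
    define j where "j = (n - i) mod n"
    have j: "j < n" using npos by (simp add: j_def)
    have "\<omega> ^ j * \<omega> ^ i = \<omega> ^ ((j + i) mod n)" by (simp add: power_add[symmetric] om_mod[of "j + i"])
    also have "(j + i) mod n = 0" unfolding j_def using i(1)
      by (metis add.commute le_add_diff_inverse less_imp_le mod_add_right_eq mod_self)
    finally have "\<omega> ^ j * \<omega> ^ i = 1" by simp
    then have "poly (\<Prod>j<n. [:1, - (\<omega> ^ j):]) x = 0"
      using j i by (auto simp: poly_prod prod_zero_iff mult.commute intro!: bexI[of _ j])
    moreover have "poly (1 - monom 1 n) x = 0"
    proof -
      have "(\<omega> ^ i) ^ n = 1" by (metis mult.commute om power_mult power_one)
      then show ?thesis using i by (simp add: poly_monom)
    qed
    ultimately show ?thesis by simp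
  qed
qed

lemma RR_n:
  assumes prim: "\<And>k. 0 < k \<Longrightarrow> k < n \<Longrightarrow> \<omega> ^ k \<noteq> 1"
  shows "vpow HAB ham ((0, 0), 0) RR n = sc \<omega> oneHA"
proof -
  have "ev (\<Prod>j<n. [:1, - (\<omega> ^ j):]) = oneHA"
    by (simp add: prodP_n[OF prim] ev_diff ev_1 ev_monom TTpow_n fun_app)
  then have "vpow HAB ham ((0, 0), 0) RR n = vpow HAB ham ((0, 0), 0) GG n"
    using RRpow[of n] by (simp add: HA.one_l HA.supp_pow)
  also have "\<dots> = vtensor (vpow TB tm (0, 0) gi n) (vpow AB am 0 A_u n)"
    by (simp add: GG_def A_u_def vpow_tensor)
  also have "\<dots> = sc \<omega> oneHA"
    by (simp add: gipow upow_n vtensor_sc_r vtensor_vunit)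
  finally show ?thesis .
qed


abbreviation "HHAB \<equiv> TB \<times> (TB \<times> AB)"
abbreviation "hham \<equiv> tensor_bm tm (tensor_bm tm am)"
abbreviation "oneHHA \<equiv> (vunit ((0, 0), ((0, 0), 0)) :: (nat \<times> nat) \<times> ((nat \<times> nat) \<times> nat) \<Rightarrow> 'k)"

definition "fP = (\<lambda>(p, k). vtensor (vunit p) (vpow HAB ham ((0, 0), 0) RR k))"
abbreviation "Phi \<equiv> lin HAB fP"

lemma Phi_eq: "id_tensor_rho n \<omega> = Phi"
proof -
  have r: "rho n \<omega> (vunit k) = vpow HAB ham ((0, 0), 0) RR k" if "k < n" for k
    using that by (simp add: rho_def HA_basis_def HA_bm_def lin_vunit A.fin)
  show ?thesis unfolding id_tensor_rho_def HA_basis_def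
    by (intro ext lin_cong_f) (auto simp: fP_def r)
qed

lemma fP_supp: "p \<in> HAB \<Longrightarrow> supp_in HHAB (fP p)"
  by (auto simp: fP_def intro!: supp_vtensor supp_vunit HA.supp_pow)

lemma Phi_hom:
  assumes prim: "\<And>k. 0 < k \<Longrightarrow> k < n \<Longrightarrow> \<omega> ^ k \<noteq> 1"
  shows "Phi (vmul HAB ham v w) = vmul HHAB hham (Phi v) (Phi w)"
proof (rule lin_hom[OF HA.fin HA.closed])
  fix p q assume pq: "p \<in> HAB" "q \<in> HAB"
  obtain p1 k q1 l where P: "p = (p1, k)" "q = (q1, l)" and M: "p1 \<in> TB" "q1 \<in> TB" "k < n" "l < n"
    using pq by auto
  have A: "sc (fst (am k l)) (vpow HAB ham ((0, 0), 0) RR (snd (am k l))) = vpow HAB ham ((0, 0), 0) RR (k + l)"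
  proof (cases "k + l < n")
    case True then show ?thesis by (simp add: A_bm_def)
  next
    case False
    then have e: "k + l = n + (k + l - n)" "(k + l) mod n = k + l - n" using M by (simp_all add: le_mod_geq)
    have "vpow HAB ham ((0, 0), 0) RR (k + l) = vpow HAB ham ((0, 0), 0) RR (n + (k + l - n))"
      using e(1) by simp
    also have "\<dots> = vmul HAB ham (vpow HAB ham ((0, 0), 0) RR n) (vpow HAB ham ((0, 0), 0) RR (k + l - n))"
      by (rule HA.pow_add)
    also have "\<dots> = sc \<omega> (vpow HAB ham ((0, 0), 0) RR (k + l - n))"
      by (simp add: RR_n[OF prim] vmul_sc_l HA.one_l HA.supp_pow)
    finally show ?thesis using False e(2) by (simp add: A_bm_def)
  qed
  have "vmul HHAB hham (fP p) (fP q) = vtensor (sc (fst (tm p1 q1)) (vunit (snd (tm p1 q1)))) (vpow HAB ham ((0, 0), 0) RR (k + l))"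
    unfolding P fP_def by (simp add: vtensor_mul vmul_unit H.fin M HA.pow_add)
  also have "\<dots> = sc (fst (ham p q)) (fP (snd (ham p q)))"
    unfolding P fP_def by (simp add: vtensor_sc_l vtensor_sc_r A[symmetric] mult.commute)
  finally show "sc (fst (ham p q)) (fP (snd (ham p q))) = vmul HHAB hham (fP p) (fP q)" by simp
qed

lemma Phi_one: "Phi oneHA = oneHHA"
  using npos by (simp add: lin_vunit HA.fin fP_def HA.pow_0 vtensor_vunit)

lemma Phi_pow:
  assumes prim: "\<And>k. 0 < k \<Longrightarrow> k < n \<Longrightarrow> \<omega> ^ k \<noteq> 1"
  shows "Phi (vpow HAB ham ((0, 0), 0) v k) = vpow HHAB hham ((0, 0), ((0, 0), 0)) (Phi v) k"
  by (induction k) (simp_all add: HA.pow_0 HHA.pow_0 Phi_one HA.pow_Suc HHA.pow_Suc Phi_hom[OF prim])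

lemma Phi_T: "Phi TT = sc c0 (vtensor xg RR)"
  using n2 by (simp add: TT_eq lin_sc lin_vunit HA.fin fP_def HA.pow_Suc HA.pow_0 HA.one_r supp_RR xg_def)

lemma Phi_G: "Phi GG = vtensor gi RR"
  using n2 by (simp add: GG_eq lin_vunit HA.fin fP_def HA.pow_Suc HA.pow_0 HA.one_r supp_RR gi_def)

end


fun qb :: "'a::comm_ring_1 \<Rightarrow> nat \<Rightarrow> nat \<Rightarrow> 'a" where
  "qb q 0 i = (if i = 0 then 1 else 0)"
| "qb q (Suc k) 0 = 1"
| "qb q (Suc k) (Suc i) = qb q k i + q ^ Suc i * qb q k (Suc i)"

lemma qb_0[simp]: "qb q k 0 = 1" by (cases k) simp_all

lemma ring_aux: "1 - a + a * (1 - b) = 1 - a * (b::'a::comm_ring_1)" by (simp add: algebra_simps)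

lemma qb_gt: "k < i \<Longrightarrow> qb q k i = 0"
proof (induction k arbitrary: i)
  case 0 then show ?case by simp
next
  case (Suc k)
  then obtain i' where "i = Suc i'" by (cases i) auto
  with Suc show ?case by simp
qed

lemma qb_prod: "qb q k i * (\<Prod>j<i. 1 - q ^ (j + 1)) = (\<Prod>j<i. 1 - q ^ (k - j))"
proof (induction k arbitrary: i)
  case 0
  then show ?case by (cases i) (simp_all add: prod.lessThan_Suc)
next
  case (Suc k)
  show ?case
  proof (cases i)
    case 0 then show ?thesis by simp
  next
    case (Suc i')
    have IH1: "qb q k i' * (\<Prod>j<i'. 1 - q ^ (j + 1)) = (\<Prod>j<i'. 1 - q ^ (k - j))" by (rule Suc.IH)
    have IH2: "qb q k (Suc i') * (\<Prod>j<Suc i'. 1 - q ^ (j + 1)) = (\<Prod>j<Suc i'. 1 - q ^ (k - j))" by (rule Suc.IH)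
    have "qb q (Suc k) (Suc i') * (\<Prod>j<Suc i'. 1 - q ^ (j + 1))
        = qb q k i' * (\<Prod>j<i'. 1 - q ^ (j + 1)) * (1 - q ^ Suc i') + q ^ Suc i' * (qb q k (Suc i') * (\<Prod>j<Suc i'. 1 - q ^ (j + 1)))"
      by (simp add: prod.lessThan_Suc algebra_simps)
    also have "\<dots> = (\<Prod>j<i'. 1 - q ^ (k - j)) * ((1 - q ^ Suc i') + q ^ Suc i' * (1 - q ^ (k - i')))"
      unfolding IH1 IH2 by (simp add: prod.lessThan_Suc algebra_simps)
    also have "\<dots> = (\<Prod>j<Suc i'. 1 - q ^ (Suc k - j))"
    proof (cases "i' \<le> k")
      case True
      then have "Suc i' + (k - i') = Suc k" by simp
      then have eq: "q ^ Suc i' * q ^ (k - i') = q ^ Suc k" by (metis power_add)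
      have r: "(\<Prod>j<Suc i'. 1 - q ^ (Suc k - j)) = (1 - q ^ Suc k) * (\<Prod>j<i'. 1 - q ^ (k - j))"
        by (simp only: prod.lessThan_Suc_shift diff_Suc_Suc diff_zero)
      show ?thesis unfolding r ring_aux eq by (simp add: mult.commute)
    next
      case False
      then have z: "(\<Prod>j<i'. 1 - q ^ (k - j)) = 0"
        by (intro prod_zero) (auto intro!: bexI[of _ k])
      have z2: "(\<Prod>j<Suc i'. 1 - q ^ (Suc k - j)) = 0"
        using False by (intro prod_zero) (auto intro!: bexI[of _ "Suc k"])
      show ?thesis using z z2 by simp
    qed
    finally show ?thesis using Suc by simp
  qed
qed

lemma qb_vanish:
  fixes q :: "'a::field"
  assumes qN: "q ^ N = 1" and prim: "\<And>j. 0 < j \<Longrightarrow> j < N \<Longrightarrow> q ^ j \<noteq> 1" and i: "0 < i" "i < N"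
  shows "qb q N i = 0"
proof -
  have "(\<Prod>j<i. 1 - q ^ (N - j)) = 0"
    using i qN by (intro prod_zero) (auto intro!: bexI[of _ 0])
  moreover have "(\<Prod>j<i. 1 - q ^ (j + 1)) \<noteq> 0"
  proof -
    have "1 - q ^ (j + 1) \<noteq> 0" if "j < i" for j
    proof -
      have "q ^ (j + 1) \<noteq> 1" using prim[of "j + 1"] i that by simp
      then show ?thesis by simp
    qed
    then show ?thesis by (simp add: prod_zero_iff del: power_Suc)
  qed
  ultimately show ?thesis using qb_prod[of q N i] by (metis mult_eq_0_iff)
qed

context balg begin

lemma comm_pow:
  assumes sX: "supp_in B X" and sY: "supp_in B Y" and c: "vmul B m Y X = sc q (vmul B m X Y)"
  shows "vmul B m Y (vpow B m e X i) = sc (q ^ i) (vmul B m (vpow B m e X i) Y)"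
proof (induction i)
  case 0 then show ?case by (simp add: pow_0 one_l one_r sY)
next
  case (Suc i)
  have "vmul B m Y (vpow B m e X (Suc i)) = vmul B m (vmul B m Y X) (vpow B m e X i)"
    by (simp add: pow_Suc mul_assoc)
  also have "\<dots> = sc q (vmul B m X (vmul B m Y (vpow B m e X i)))"
    by (simp add: c vmul_sc_l mul_assoc)
  also have "\<dots> = sc (q ^ Suc i) (vmul B m (vpow B m e X (Suc i)) Y)"
    by (simp add: Suc vmul_sc_r pow_Suc mul_assoc)
  finally show ?case .
qed

lemma qbinom:
  assumes sX: "supp_in B X" and sY: "supp_in B Y" and c: "vmul B m Y X = sc q (vmul B m X Y)"
  shows "vpow B m e (X + Y) k = (\<Sum>i\<le>k. sc (qb q k i) (vmul B m (vpow B m e X i) (vpow B m e Y (k - i))))"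
proof (induction k)
  case 0 then show ?case by (simp add: pow_0 one_l supp_one)
next
  case (Suc k)
  define F where "F i = vmul B m (vpow B m e X i) (vpow B m e Y (k - i))" for i
  define G where "G i = sc (qb q k i * q ^ i) (vmul B m (vpow B m e X i) (vpow B m e Y (Suc k - i)))" for i
  have XF: "vmul B m X (F i) = vmul B m (vpow B m e X (Suc i)) (vpow B m e Y (k - i))" for i
    by (simp add: F_def pow_Suc mul_assoc)
  have YF: "i \<le> k \<Longrightarrow> sc (qb q k i) (vmul B m Y (F i)) = G i" for i
  proof -
    assume ik: "i \<le> k"
    have "vmul B m Y (F i) = sc (q ^ i) (vmul B m (vpow B m e X i) (vmul B m Y (vpow B m e Y (k - i))))"
      by (simp add: F_def mul_assoc[symmetric] comm_pow[OF sX sY c] vmul_sc_l)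
    also have "vmul B m Y (vpow B m e Y (k - i)) = vpow B m e Y (Suc k - i)"
      using ik by (simp add: pow_Suc Suc_diff_le)
    finally show ?thesis by (simp add: G_def mult.commute)
  qed
  have "vpow B m e (X + Y) (Suc k) = (\<Sum>i\<le>k. sc (qb q k i) (vmul B m X (F i))) + (\<Sum>i\<le>k. sc (qb q k i) (vmul B m Y (F i)))"
    by (simp add: pow_Suc Suc.IH F_def vmul_add_l vmul_sum_r vmul_sc_r sum.distrib sc_add)
  also have "(\<Sum>i\<le>k. sc (qb q k i) (vmul B m Y (F i))) = (\<Sum>i\<le>k. G i)"
    by (intro sum.cong refl) (simp add: YF)
  also have "(\<Sum>i\<le>k. G i) = (\<Sum>i\<le>Suc k. G i)"
    by (simp add: G_def qb_gt)
  also have "\<dots> = G 0 + (\<Sum>i\<le>k. G (Suc i))"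
    by (rule sum.atMost_Suc_shift)
  finally have L: "vpow B m e (X + Y) (Suc k) = (\<Sum>i\<le>k. sc (qb q k i) (vmul B m X (F i))) + (G 0 + (\<Sum>i\<le>k. G (Suc i)))" .
  have "(\<Sum>i\<le>Suc k. sc (qb q (Suc k) i) (vmul B m (vpow B m e X i) (vpow B m e Y (Suc k - i))))
     = sc (qb q (Suc k) 0) (vmul B m (vpow B m e X 0) (vpow B m e Y (Suc k - 0)))
       + (\<Sum>i\<le>k. sc (qb q (Suc k) (Suc i)) (vmul B m (vpow B m e X (Suc i)) (vpow B m e Y (Suc k - Suc i))))"
    by (rule sum.atMost_Suc_shift)
  also have "\<dots> = G 0 + ((\<Sum>i\<le>k. sc (qb q k i) (vmul B m X (F i))) + (\<Sum>i\<le>k. G (Suc i)))"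
    by (simp add: G_def XF sc_add_l sum.distrib mult.commute)
  finally show ?case using L by (simp add: algebra_simps)
qed

end


context balg begin

lemma pow_one: "vpow B m e (vunit e) k = vunit e"
  by (induction k) (simp_all add: pow_0 pow_Suc one_l supp_one)

lemma comm_pow2:
  assumes sX: "supp_in B X" and sY: "supp_in B Y" and c: "vmul B m Y X = sc q (vmul B m X Y)"
  shows "vmul B m (vpow B m e Y j) (vpow B m e X k) = sc (q ^ (k * j)) (vmul B m (vpow B m e X k) (vpow B m e Y j))"
proof (induction j)
  case 0 then show ?case by (simp add: pow_0 one_l one_r supp_pow)
next
  case (Suc j)
  have "vmul B m (vpow B m e Y (Suc j)) (vpow B m e X k) = vmul B m Y (vmul B m (vpow B m e Y j) (vpow B m e X k))"
    by (simp add: pow_Suc mul_assoc)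
  also have "\<dots> = sc (q ^ (k * j)) (vmul B m (vmul B m Y (vpow B m e X k)) (vpow B m e Y j))"
    by (simp add: Suc vmul_sc_r mul_assoc)
  also have "\<dots> = sc (q ^ (k * Suc j)) (vmul B m (vpow B m e X k) (vpow B m e Y (Suc j)))"
    by (simp add: comm_pow[OF sX sY c] vmul_sc_l pow_Suc mul_assoc power_add mult.commute)
  finally show ?case .
qed

end

context taft_ctx begin

abbreviation "HHB \<equiv> TB \<times> TB"
abbreviation "hhm \<equiv> tensor_bm tm tm"
abbreviation "oneHH \<equiv> (vunit ((0, 0), (0, 0)) :: (nat \<times> nat) \<times> (nat \<times> nat) \<Rightarrow> 'k)"
abbreviation "Dx \<equiv> (taft_Delta_x :: (nat \<times> nat) \<times> (nat \<times> nat) \<Rightarrow> 'k)"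
abbreviation "Dg \<equiv> (taft_Delta_g :: (nat \<times> nat) \<times> (nat \<times> nat) \<Rightarrow> 'k)"
abbreviation "DD \<equiv> taft_Delta_basis n \<omega>"

definition "XA = (vtensor (vunit (1, 0)) (vunit (0, 0)) :: (nat \<times> nat) \<times> (nat \<times> nat) \<Rightarrow> 'k)"
definition "YB = (vtensor (vunit (0, 1)) (vunit (1, 0)) :: (nat \<times> nat) \<times> (nat \<times> nat) \<Rightarrow> 'k)"

lemma Dx_eq: "Dx = XA + YB"
  by (rule ext) (simp add: taft_Delta_x_def XA_def YB_def taft_x_def taft_g_def fun_app)

lemma supp_XA: "supp_in HHB XA" using n2 by (auto simp: XA_def intro!: supp_vtensor supp_vunit)
lemma supp_YB: "supp_in HHB YB" using n2 by (auto simp: YB_def intro!: supp_vtensor supp_vunit)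
lemma supp_Dx: "supp_in HHB Dx" by (simp add: Dx_eq supp_add supp_XA supp_YB)
lemma supp_Dg: "supp_in HHB Dg" using n2 by (auto simp: taft_Delta_g_def taft_g_def intro!: supp_vtensor supp_vunit)

lemma YX: "vmul HHB hhm YB XA = sc (inverse \<omega>) (vmul HHB hhm XA YB)"
  using n2 by (simp add: XA_def YB_def vtensor_mul Hmul vtensor_sc_l)

lemma Dg_pow: "vpow HHB hhm ((0, 0), (0, 0)) Dg j = vtensor (vunit (0, j mod n)) (vunit (0, j mod n))"
  by (simp add: taft_Delta_g_def vpow_tensor gpow)

lemma GX: "vmul HHB hhm Dg Dx = sc (inverse \<omega>) (vmul HHB hhm Dx Dg)"
  using n2 by (simp add: Dx_eq XA_def YB_def taft_Delta_g_def taft_g_def vmul_add_l vmul_add_r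
      vtensor_mul Hmul vtensor_sc_l vtensor_sc_r sc_add)

lemma q_prim:
  assumes prim: "\<And>k. 0 < k \<Longrightarrow> k < n \<Longrightarrow> \<omega> ^ k \<noteq> 1"
  shows "0 < j \<Longrightarrow> j < n \<Longrightarrow> inverse \<omega> ^ j \<noteq> 1"
  using prim[of j] by (metis inverse_1 inverse_inverse_eq power_inverse)

lemma Dx_n:
  assumes prim: "\<And>k. 0 < k \<Longrightarrow> k < n \<Longrightarrow> \<omega> ^ k \<noteq> 1"
  shows "vpow HHB hhm ((0, 0), (0, 0)) Dx n = 0"
proof -
  have XAn: "vpow HHB hhm ((0, 0), (0, 0)) XA n = 0"
    using xpow_n by (simp add: XA_def vpow_tensor taft_x_def vtensor_zero_l)
  have YBn: "vpow HHB hhm ((0, 0), (0, 0)) YB n = 0"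
    using xpow_n by (simp add: YB_def vpow_tensor taft_x_def vtensor_zero_r)
  have "vpow HHB hhm ((0, 0), (0, 0)) Dx n = (\<Sum>i\<le>n. sc (qb (inverse \<omega>) n i)
      (vmul HHB hhm (vpow HHB hhm ((0, 0), (0, 0)) XA i) (vpow HHB hhm ((0, 0), (0, 0)) YB (n - i))))"
    unfolding Dx_eq by (rule HH.qbinom[OF supp_XA supp_YB YX])
  also have "\<dots> = 0"
  proof (rule sum.neutral, intro ballI)
    fix i assume "i \<in> {..n}"
    then have i: "i \<le> n" by simp
    show "sc (qb (inverse \<omega>) n i) (vmul HHB hhm (vpow HHB hhm ((0, 0), (0, 0)) XA i) (vpow HHB hhm ((0, 0), (0, 0)) YB (n - i))) = 0"
    proof (cases "i = 0 \<or> i = n")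
      case True then show ?thesis using npos by (auto simp: XAn YBn vmul_zero_l vmul_zero_r)
    next
      case False
      then have "qb (inverse \<omega>) n i = 0" using i by (intro qb_vanish[OF q_n q_prim[OF prim]]) auto
      then show ?thesis by simp
    qed
  qed
  finally show ?thesis .
qed

lemma DD_eq: "p \<in> TB \<Longrightarrow> DD p = vmul HHB hhm (vpow HHB hhm ((0, 0), (0, 0)) Dx (fst p)) (vpow HHB hhm ((0, 0), (0, 0)) Dg (snd p))"
  by (cases p) (auto simp: taft_Delta_basis_def HH_basis_def HH_bm_def)

lemma supp_DD: "supp_in HHB (DD p)"
  by (cases p) (auto simp: taft_Delta_basis_def HH_basis_def HH_bm_def intro: HH.supp_mul)

lemma DD_mul:
  assumes prim: "\<And>k. 0 < k \<Longrightarrow> k < n \<Longrightarrow> \<omega> ^ k \<noteq> 1"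
    and p: "p \<in> TB" and p': "p' \<in> TB"
  shows "vmul HHB hhm (DD p) (DD p') = sc (fst (tm p p')) (DD (snd (tm p p')))"
proof -
  obtain i j k l where P: "p = (i, j)" "p' = (k, l)" by (cases p, cases p')
  then have M: "i < n" "j < n" "k < n" "l < n" using p p' by auto
  let ?X = "vpow HHB hhm ((0, 0), (0, 0)) Dx"
  let ?G = "vpow HHB hhm ((0, 0), (0, 0)) Dg"
  have "vmul HHB hhm (DD p) (DD p') = vmul HHB hhm (?X i) (vmul HHB hhm (vmul HHB hhm (?G j) (?X k)) (?G l))"
    using p p' by (simp add: DD_eq P HH.mul_assoc)
  also have "\<dots> = sc (inverse \<omega> ^ (k * j)) (vmul HHB hhm (?X (i + k)) (?G (j + l)))"
    by (simp add: HH.comm_pow2[OF supp_Dx supp_Dg GX] vmul_sc_l vmul_sc_r HH.mul_assoc HH.pow_add)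
  also have "?G (j + l) = ?G ((j + l) mod n)" by (simp add: Dg_pow)
  finally have L: "vmul HHB hhm (DD p) (DD p') = sc (inverse \<omega> ^ (k * j)) (vmul HHB hhm (?X (i + k)) (?G ((j + l) mod n)))" .
  show ?thesis
  proof (cases "i + k < n")
    case True
    then show ?thesis using L npos by (simp add: P taft_bm_def DD_eq mult.commute)
  next
    case False
    then have "?X (i + k) = vmul HHB hhm (?X (i + k - n)) (?X n)"
      by (simp add: HH.pow_add[symmetric])
    then have "?X (i + k) = 0" by (simp add: Dx_n[OF prim] vmul_zero_r)
    then show ?thesis using L False by (simp add: P taft_bm_def vmul_zero_l)
  qed
qed

end



lemma supp_lin: "(\<And>p. p \<in> B \<Longrightarrow> supp_in C (f p)) \<Longrightarrow> supp_in C (lin B f (v::_ \<Rightarrow> 'k::field))"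
  unfolding lin_as_sum by (intro supp_sum supp_sc) auto

lemma supp_reassoc: "supp_in ((A \<times> B) \<times> C) X \<Longrightarrow> supp_in (A \<times> (B \<times> C)) (reassoc X)"
  by (auto simp: supp_in_def reassoc_def)

context taft_ctx begin

definition "fD = (\<lambda>(p, k). reassoc (vtensor (DD p) (vunit k)))"
abbreviation "Psi \<equiv> lin HAB fD"

lemma Psi_eq: "Delta_tensor_id n \<omega> = Psi"
  unfolding Delta_tensor_id_def HA_basis_def fD_def reassoc_def
  by (intro ext arg_cong[where f = "lin _"]) (auto simp: split_def)

lemma Psi_hom:
  assumes prim: "\<And>k. 0 < k \<Longrightarrow> k < n \<Longrightarrow> \<omega> ^ k \<noteq> 1"
  shows "Psi (vmul HAB ham v w) = vmul HHAB hham (Psi v) (Psi w)"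
proof (rule lin_hom[OF HA.fin HA.closed])
  fix p q assume pq: "p \<in> HAB" "q \<in> HAB"
  obtain p1 k q1 l where P: "p = (p1, k)" "q = (q1, l)" by (cases p, cases q)
  then have M: "p1 \<in> TB" "q1 \<in> TB" "k < n" "l < n" using pq by auto
  have "vmul HHAB hham (fD p) (fD q) = reassoc (vtensor (vmul HHB hhm (DD p1) (DD q1)) (vmul AB am (vunit k) (vunit l)))"
    unfolding P fD_def by (simp add: reassoc_mul vtensor_mul)
  also have "\<dots> = sc (fst (ham p q)) (fD (snd (ham p q)))"
    unfolding P fD_def using M
    by (simp add: DD_mul[OF prim] vmul_unit A.fin vtensor_sc_l vtensor_sc_r reassoc_sc mult.commute)
  finally show "sc (fst (ham p q)) (fD (snd (ham p q))) = vmul HHAB hham (fD p) (fD q)" by simp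
qed

lemma Psi_one: "Psi oneHA = oneHHA"
proof -
  have "DD (0, 0) = oneHH" using npos
    by (simp add: DD_eq HH.pow_0 HH.one_l HH.supp_one)
  then show ?thesis using npos
    by (simp add: lin_vunit HA.fin fD_def vtensor_vunit reassoc_vunit)
qed

lemma Psi_pow:
  assumes prim: "\<And>k. 0 < k \<Longrightarrow> k < n \<Longrightarrow> \<omega> ^ k \<noteq> 1"
  shows "Psi (vpow HAB ham ((0, 0), 0) v k) = vpow HHAB hham ((0, 0), ((0, 0), 0)) (Psi v) k"
  by (induction k) (simp_all add: HA.pow_0 HHA.pow_0 Psi_one HA.pow_Suc HHA.pow_Suc Psi_hom[OF prim])

definition "UU = vtensor (vunit (0, 0)) TT"
definition "VV = sc c0 (vtensor xg GG)"
definition "WW = vtensor gi GG"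
definition "NN = UU + VV"

lemma DD_1: "DD (1, m1) = vtensor xg gi + vtensor (vunit (0, 0)) xg"
proof -
  have a: "1 < n" "(Suc m1) mod n = 0" using n2 m1_Suc by auto
  have "DD (1, m1) = vmul HHB hhm Dx (vtensor gi gi)"
    using n2 by (simp add: DD_eq Dg_pow HH.pow_Suc HH.pow_0 HH.one_r supp_Dx gi_def)
  also have "\<dots> = vtensor xg gi + vtensor (vunit (0, 0)) xg"
    using a by (simp add: Dx_eq XA_def YB_def gi_def xg_def vmul_add_l vtensor_mul Hmul)
  finally show ?thesis .
qed

lemma Psi_T: "Psi TT = NN"
proof -
  have a: "(1, m1) \<in> TB" "(1::nat) \<in> AB" using n2 by auto
  have mem: "((1, m1), 1) \<in> HAB" using a by simp
  have "Psi TT = sc c0 (fD ((1, m1), 1))"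
    by (simp only: TT_eq lin_sc lin_vunit[OF HA.fin mem])
  also have "fD ((1, m1), 1) = reassoc (vtensor (DD (1, m1)) (vunit 1))" by (simp add: fD_def)
  also have "\<dots> = vtensor xg (vtensor gi (vunit 1)) + vtensor (vunit (0, 0)) (vtensor xg (vunit 1))"
    by (simp only: DD_1 vtensor_add_l reassoc_add reassoc_tensor)
  also have "sc c0 \<dots> = NN"
    by (simp only: NN_def UU_def VV_def TT_def GG_def vtensor_sc_r sc_add add.commute)
  finally show ?thesis .
qed

lemma Psi_G: "Psi GG = WW"
proof -
  have a: "(0, m1) \<in> TB" "(1::nat) \<in> AB" using n2 by auto
  have d: "DD (0, m1) = vtensor gi gi" using npos
    by (simp add: DD_eq Dg_pow HH.pow_0 HH.one_l gi_def supp_vtensor supp_vunit)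
  have mem: "((0, m1), 1) \<in> HAB" using a by simp
  have "Psi GG = fD ((0, m1), 1)"
    by (simp only: GG_eq lin_vunit[OF HA.fin mem])
  also have "\<dots> = reassoc (vtensor (DD (0, m1)) (vunit 1))" by (simp add: fD_def)
  also have "\<dots> = WW" by (simp only: d reassoc_tensor WW_def GG_def)
  finally show ?thesis .
qed

lemma supp_Phi: "supp_in HHAB (Phi v)" by (rule supp_lin) (rule fP_supp)
lemma supp_Psi: "supp_in HHAB (Psi v)"
proof (rule supp_lin)
  fix p assume "p \<in> HAB"
  then obtain p1 k where P: "p = (p1, k)" "k < n" by auto
  show "supp_in HHAB (fD p)" unfolding P fD_def
    by (simp add: supp_reassoc supp_vtensor supp_DD supp_vunit P)
qed

lemma oneHHA_eq: "oneHHA = vtensor (vunit (0, 0)) oneHA" by (simp add: vtensor_vunit)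

lemma Phi_main:
  assumes prim: "\<And>k. 0 < k \<Longrightarrow> k < n \<Longrightarrow> \<omega> ^ k \<noteq> 1"
  shows "vmul HHAB hham (oneHHA - NN) (Phi RR) = WW"
proof -
  have sxg: "supp_in TB xg" using n2 by (simp add: xg_def supp_vunit)
  have sgi: "supp_in TB gi" using n2 by (simp add: gi_def supp_vunit)
  have UT: "vmul HHAB hham (oneHHA - UU) (Phi TT) = VV"
    by (simp add: oneHHA_eq UU_def vtensor_diff_r[symmetric] Phi_T vmul_sc_r vtensor_mul H.one_l sxg one_minus_T_RR VV_def)
  have UG: "vmul HHAB hham (oneHHA - UU) (Phi GG) = WW"
    by (simp add: oneHHA_eq UU_def vtensor_diff_r[symmetric] Phi_G vtensor_mul H.one_l sgi one_minus_T_RR WW_def)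
  have sU: "supp_in HHAB (oneHHA - UU)"
    using npos by (simp add: UU_def supp_diff HHA.supp_one supp_vtensor supp_vunit supp_TT)
  have N: "oneHHA - NN = vmul HHAB hham (oneHHA - UU) (oneHHA - Phi TT)"
  proof -
    have "vmul HHAB hham (oneHHA - UU) (oneHHA - Phi TT) = (oneHHA - UU) - VV"
      by (simp only: vmul_diff_r UT HHA.one_r[OF sU])
    then show ?thesis by (simp add: NN_def diff_diff_eq)
  qed
  have PR: "Phi RR = (\<Sum>i<n. vmul HHAB hham (vpow HHAB hham ((0, 0), ((0, 0), 0)) (Phi TT) i) (Phi GG))"
    by (simp only: rho_u_eq lin_sum Phi_hom[OF prim] Phi_pow[OF prim])
  have PTn: "vpow HHAB hham ((0, 0), ((0, 0), 0)) (Phi TT) n = 0"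
    by (simp only: Phi_pow[OF prim, symmetric] TTpow_n lin_zero)
  have "vmul HHAB hham (oneHHA - Phi TT) (Phi RR) = Phi GG"
    by (simp only: PR HHA.telescope[OF supp_Phi] PTn vmul_zero_l diff_zero)
  then show ?thesis by (simp only: N HHA.mul_assoc UG)
qed

lemma Psi_main:
  assumes prim: "\<And>k. 0 < k \<Longrightarrow> k < n \<Longrightarrow> \<omega> ^ k \<noteq> 1"
  shows "vmul HHAB hham (oneHHA - NN) (Psi RR) = WW"
proof -
  have PR: "Psi RR = (\<Sum>i<n. vmul HHAB hham (vpow HHAB hham ((0, 0), ((0, 0), 0)) NN i) WW)"
    by (simp only: rho_u_eq lin_sum Psi_hom[OF prim] Psi_pow[OF prim] Psi_T Psi_G)
  have PTn: "vpow HHAB hham ((0, 0), ((0, 0), 0)) NN n = 0"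
    by (simp only: Psi_T[symmetric] Psi_pow[OF prim, symmetric] TTpow_n lin_zero)
  have sW: "supp_in HHAB WW" using Psi_G supp_Psi by metis
  show ?thesis
    by (simp only: PR HHA.telescope[OF sW] PTn vmul_zero_l diff_zero)
qed

lemma Phi_Psi_RR:
  assumes prim: "\<And>k. 0 < k \<Longrightarrow> k < n \<Longrightarrow> \<omega> ^ k \<noteq> 1"
  shows "Phi RR = Psi RR"
proof -
  have "vmul HHAB hham (oneHHA - NN) (Phi RR - Psi RR) = 0"
    by (simp only: vmul_diff_r Phi_main[OF prim] Psi_main[OF prim] diff_self)
  moreover have "vpow HHAB hham ((0, 0), ((0, 0), 0)) NN n = 0"
    by (simp only: Psi_T[symmetric] Psi_pow[OF prim, symmetric] TTpow_n lin_zero)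
  moreover have "supp_in HHAB (Phi RR - Psi RR)" by (intro supp_diff supp_Phi supp_Psi)
  ultimately have "Phi RR - Psi RR = 0"
    using HHA.nil_cancel by blast
  then show ?thesis by simp
qed

end

theorem corollary4p3:
  fixes \<omega> :: "'k::field_char_0" and n :: nat
  assumes "2 \<le> n" and "primitive_root n \<omega>"
  shows "\<forall>a :: nat \<Rightarrow> 'k.
           id_tensor_rho n \<omega> (rho n \<omega> a) = Delta_tensor_id n \<omega> (rho n \<omega> a)"
proof
  fix a :: "nat \<Rightarrow> 'k"
  have om: "\<omega> ^ n = 1" and prim: "\<And>k. 0 < k \<Longrightarrow> k < n \<Longrightarrow> \<omega> ^ k \<noteq> 1"
    using assms(2) by (auto simp: primitive_root_def)
  interpret taft_ctx n \<omega> using assms(1) om by unfold_locales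
  have r: "rho n \<omega> a = lin AB (\<lambda>k. vpow HAB ham ((0, 0), 0) RR k) a"
    by (simp add: rho_def HA_basis_def HA_bm_def)
  show "id_tensor_rho n \<omega> (rho n \<omega> a) = Delta_tensor_id n \<omega> (rho n \<omega> a)"
    unfolding Phi_eq Psi_eq r lin_lin
    by (rule lin_cong_f) (simp add: Phi_pow[OF prim] Psi_pow[OF prim] Phi_Psi_RR[OF prim])
qed


end
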